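(* Suppose $0<a_1\le a_2<1$, that condition $[A_1]$ holds, and that $f=F'$ and $g=G'$ satisfy a Hölder condition of order $\alpha\ge1/2$ on $F^{-1}(U)$. Define $R_n(p_n)$ by $$\int_{\xi_{p_n n:n}}^{\xi_{p_n}}\big(G(x)-G(\xi_{p_n})\big)\,dF_n(x)=-\frac12[F_n(\xi_{p_n})-F(\xi_{p_n})]^2\frac gf(\xi_{p_n})+R_n(p_n).$$ Then for each $c>0$ there is a constant $A>0$, not depending on $n$, such that $$\mathbf P\big(|R_n(p_n)|>A(\log n/n)^{5/4}\big)=O(n^{-c}).$$
   Context: Let $X_1,X_2,\dots$ be i.i.d. real random variables with distribution function $F$, and let $F^{-1}(u)=\inf\{x:F(x)\ge u\}$. Let $X_{1:n}\le\dots\le X_{n:n}$ be the order statistics, $F_n$ the empirical distribution function and $F_n^{-1}$ its left-continuous inverse. Let $k_n$ be integers with $0\le k_n\le n$, and put $p_n=k_n/n$, $\xi_{p_n}=F^{-1}(p_n)$, $\xi_{p_n n:n}=F_n^{-1}(p_n)=X_{k_n:n}$, $a_1=\liminf p_n$ and $a_2=\limsup p_n$. The integral means $$\frac{\operatorname{sgn}(N_n-k_n)}{n}\sum_{i=(k_n\wedge N_n)+1}^{k_n\vee N_n}\big(G(X_{i:n})-G(\xi_{p_n})\big),$$ where $N_n=\#\{i\le n:X_i\le\xi_{p_n}\}$ and $\operatorname{sgn}(0)=0$. Condition $[A_1]$ (here $0<a_1\le a_2<1$): there is an open $U\subset(0,1)$ containing $[a_1,a_2]$ on which $F^{-1}$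 is differentiable, i.e. $f=F'$ exists and is positive on $F^{-1}(U)$. $G$ is differentiable on $F^{-1}(U)$ with $g=G'$, and $(g/f)(x)=g(x)/f(x)$. A Hölder condition of order $\alpha$ on $S$ means $|h(x)-h(y)|\le L|x-y|^\alpha$ for all $x,y\in S$. *)

theory Defs
  imports "HOL-Probability.Probability"
begin

definition quantile :: "(real \<Rightarrow> real) \<Rightarrow> real \<Rightarrow> real" where
  "quantile F u = Inf {x. u \<le> F x}"

definition ecdf :: "(nat \<Rightarrow> 'a \<Rightarrow> real) \<Rightarrow> nat \<Rightarrow> 'a \<Rightarrow> real \<Rightarrow> real" where
  "ecdf X n w x = real (card {i\<in>{1..n}. X i w \<le> x}) / real n"

text \<open>Order statistic X_{i:n} (1-based: i = 1 is the minimum).\<close>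
definition order_stat :: "(nat \<Rightarrow> 'a \<Rightarrow> real) \<Rightarrow> nat \<Rightarrow> 'a \<Rightarrow> nat \<Rightarrow> real" where
  "order_stat X n w i = sort (map (\<lambda>j. X j w) [1..<n+1]) ! (i - 1)"

definition count_le :: "(nat \<Rightarrow> 'a \<Rightarrow> real) \<Rightarrow> nat \<Rightarrow> 'a \<Rightarrow> real \<Rightarrow> nat" where
  "count_le X n w xi = card {i\<in>{1..n}. X i w \<le> xi}"

text \<open>The integral  \<integral>_{X_{k:n}}^{xi} (G(x) - G(xi)) dF_n(x), given by the paper as
  sgn(N_n - k)/n * \<Sum>_{i=(k \<and> N_n)+1}^{k \<or> N_n} (G(X_{i:n}) - G(xi)).\<close>
definition int_mean ::
  "(real \<Rightarrow> real) \<Rightarrow> (nat \<Rightarrow> 'a \<Rightarrow> real) \<Rightarrow> nat \<Rightarrow> nat \<Rightarrow> real \<Rightarrow> 'a \<Rightarrow> real" where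
  "int_mean G X n k xi w =
     (let N = count_le X n w xi in
      sgn (real N - real k) / real n *
        (\<Sum>i\<in>{min k N + 1 .. max k N}. G (order_stat X n w i) - G xi))"

definition holder_on :: "real set \<Rightarrow> real \<Rightarrow> (real \<Rightarrow> real) \<Rightarrow> bool" where
  "holder_on S \<alpha> h \<longleftrightarrow> (\<exists>L. \<forall>x\<in>S. \<forall>y\<in>S. \<bar>h x - h y\<bar> \<le> L * \<bar>x - y\<bar> powr \<alpha>)"

end

theory Submission
  imports Defs "HOL-Real_Asymp.Real_Asymp"
begin

lemma exp_le_quad:
  fixes l :: real assumes "\<bar>l\<bar> \<le> 1" shows "exp l \<le> 1 + l + l\<^sup>2"
proof (cases "l \<ge> 0")
  case True thus ?thesis using exp_bound[of l] assms by auto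
next
  case False
  define t where "t = -l"
  have t: "0 \<le> t" "t \<le> 1" using False assms by (auto simp: t_def)
  have e: "1 + t + t\<^sup>2/2 \<le> exp t" using exp_lower_Taylor_quadratic t by auto
  have "1 - t + t\<^sup>2 = (t - 1/2)\<^sup>2 + 3/4" by (simp add: power2_eq_square algebra_simps)
  hence pos: "0 < 1 - t + t\<^sup>2" by (metis add_nonneg_pos zero_le_power2 zero_less_divide_iff zero_less_numeral)
  have "(1 - t + t\<^sup>2) * (1 + t + t\<^sup>2/2) = 1 + t\<^sup>2/2 + t^3/2 + t^4/2"
    by (simp add: field_simps power2_eq_square power3_eq_cube power4_eq_xxxx)
  moreover have "0 \<le> t\<^sup>2/2 + t^3/2 + t^4/2" using t by simp
  ultimately have "1 \<le> (1 - t + t\<^sup>2) * (1 + t + t\<^sup>2/2)" by linarith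
  also have "\<dots> \<le> (1 - t + t\<^sup>2) * exp t" using e pos by (intro mult_left_mono) auto
  finally have "exp (-t) \<le> 1 - t + t\<^sup>2" by (simp add: exp_minus field_simps)
  thus ?thesis by (simp add: t_def)
qed
lemma (in prob_space) bern_mgf:
  assumes Z: "random_variable borel Z" and S: "S \<in> sets borel"
    and q: "prob {w\<in>space M. Z w \<in> S} = q" and l: "\<bar>l\<bar> \<le> 1"
  shows "(\<integral>\<^sup>+w. ennreal (exp (l * (indicator S (Z w) - q))) \<partial>M) \<le> ennreal (exp (q * l\<^sup>2))"
proof -
  define A where "A = {w\<in>space M. Z w \<in> S}"
  have A: "A \<in> sets M" unfolding A_def using Z S by measurable
  have "(\<integral>\<^sup>+w. ennreal (exp (l * (indicator S (Z w) - q))) \<partial>M) =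
        (\<integral>\<^sup>+w. ennreal (exp (l*(1-q))) * indicator A w + ennreal (exp (-l*q)) * indicator (space M - A) w \<partial>M)"
    by (intro nn_integral_cong) (auto simp: A_def indicator_def)
  also have "\<dots> = ennreal (exp (l*(1-q))) * emeasure M A + ennreal (exp (-l*q)) * emeasure M (space M - A)"
    using A by (subst nn_integral_add) (auto simp: nn_integral_cmult_indicator)
  also have "\<dots> = ennreal (exp (l*(1-q)) * q + exp (-l*q) * (1 - q))"
  proof -
    have q01: "0 \<le> q" "q \<le> 1" using q by auto
    have "emeasure M A = ennreal q" "emeasure M (space M - A) = ennreal (1 - q)"
      using A q by (auto simp: emeasure_eq_measure prob_compl A_def)
    moreover have "ennreal (exp (l*(1-q))) * ennreal q = ennreal (exp (l*(1-q)) * q)"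
      "ennreal (exp (-l*q)) * ennreal (1-q) = ennreal (exp (-l*q) * (1-q))"
      using q01 by (auto simp: ennreal_mult)
    moreover have "ennreal (exp (l*(1-q)) * q) + ennreal (exp (-l*q) * (1-q)) = ennreal (exp (l*(1-q)) * q + exp (-l*q) * (1 - q))"
      using q01 by (subst ennreal_plus) auto
    ultimately show ?thesis by simp
  qed
  also have "\<dots> \<le> ennreal (exp (q * l\<^sup>2))"
  proof (intro ennreal_leI)
    have q01: "0 \<le> q" "q \<le> 1" using q by auto
    have "exp (l*(1-q)) * q + exp (-l*q) * (1 - q) = exp (-l*q) * (1 + q * (exp l - 1))"
      by (simp add: algebra_simps exp_diff[symmetric] exp_add[symmetric] mult_exp_exp)
    also have "\<dots> \<le> exp (-l*q) * (1 + q*(l + l\<^sup>2))"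
      using exp_le_quad[OF l] q01 by (intro mult_left_mono) (auto intro!: mult_left_mono)
    also have "\<dots> \<le> exp (-l*q) * exp (q*(l + l\<^sup>2))"
      by (intro mult_left_mono) (auto simp: exp_ge_add_one_self)
    also have "\<dots> = exp (q * l\<^sup>2)" by (simp add: mult_exp_exp algebra_simps)
    finally show "exp (l*(1-q)) * q + exp (-l*q) * (1 - q) \<le> exp (q * l\<^sup>2)" .
  qed
  finally show ?thesis .
qed

lemma card_eq_sum_indicator:
  assumes "finite I"
  shows "real (card {i\<in>I. X i w \<in> S}) = (\<Sum>i\<in>I. indicator S (X i w))"
proof -
  have "(\<Sum>i\<in>I. indicator S (X i w) :: real) = (\<Sum>i\<in>{i\<in>I. X i w \<in> S}. 1)"
    using sum.inter_filter[OF assms, of "\<lambda>_. 1::real" "\<lambda>i. X i w \<in> S"] by (simp add: indicator_def of_bool_def)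
  thus ?thesis by simp
qed

lemma (in prob_space) count_mgf:
  assumes fin: "finite I" and indep: "indep_vars (\<lambda>_. borel) X I" and S: "S \<in> sets borel"
    and q: "\<And>i. i\<in>I \<Longrightarrow> prob {w\<in>space M. X i w \<in> S} = q"
    and Q: "real (card I) * q \<le> Q" and l: "\<bar>l\<bar> \<le> 1"
  shows "(\<integral>\<^sup>+w. ennreal (exp (l * (\<Sum>i\<in>I. indicator S (X i w) - q))) * indicator (space M) w \<partial>M)
          \<le> ennreal (exp (Q * l\<^sup>2))"
proof -
  have rv: "\<And>i. i \<in> I \<Longrightarrow> random_variable borel (X i)" using indep by (auto simp: indep_vars_def)
  have "(\<integral>\<^sup>+w. ennreal (exp (l * (\<Sum>i\<in>I. indicator S (X i w) - q))) * indicator (space M) w \<partial>M)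
      = (\<integral>\<^sup>+w. (\<Prod>i\<in>I. ennreal (exp (l * (indicator S (X i w) - q)))) \<partial>M)"
    by (intro nn_integral_cong) (simp add: sum_distrib_left exp_sum fin prod_ennreal)
  also have "\<dots> = (\<Prod>i\<in>I. \<integral>\<^sup>+w. ennreal (exp (l * (indicator S (X i w) - q))) \<partial>M)"
    using S by (intro indep_vars_nn_integral fin indep_vars_compose2[OF indep]) auto
  also have "\<dots> \<le> (\<Prod>i\<in>I. ennreal (exp (q * l\<^sup>2)))"
    by (intro prod_mono_ennreal bern_mgf rv S q l)
  also have "\<dots> = ennreal (exp (real (card I) * q * l\<^sup>2))"
    by (simp add: ennreal_power exp_of_nat_mult[symmetric] mult.assoc)
  also have "\<dots> \<le> ennreal (exp (Q * l\<^sup>2))"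
    using Q by (intro ennreal_leI) (auto intro!: mult_right_mono)
  finally show ?thesis .
qed


lemma (in prob_space) count_tail:
  assumes fin: "finite I" and indep: "indep_vars (\<lambda>_. borel) X I" and S: "S \<in> sets borel"
    and q: "\<And>i. i\<in>I \<Longrightarrow> prob {w\<in>space M. X i w \<in> S} = q"
    and Q: "real (card I) * q \<le> Q" and s: "0 < s" "s \<le> 2*Q"
  shows "{w\<in>space M. s \<le> \<bar>real (card {i\<in>I. X i w \<in> S}) - real (card I) * q\<bar>} \<in> events"
    and "prob {w\<in>space M. s \<le> \<bar>real (card {i\<in>I. X i w \<in> S}) - real (card I) * q\<bar>} \<le> 2 * exp (-(s\<^sup>2)/(4*Q))"
proof -
  have rv: "\<And>i. i \<in> I \<Longrightarrow> random_variable borel (X i)" using indep by (auto simp: indep_vars_def)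
  define fS where "fS w = (\<Sum>i\<in>I. indicator S (X i w) - q)" for w
  have fS_eq: "real (card {i\<in>I. X i w \<in> S}) - real (card I) * q = fS w" for w
    unfolding fS_def using fin by (simp add: card_eq_sum_indicator sum_subtractf)
  have fS_meas[measurable]: "fS \<in> borel_measurable M"
    unfolding fS_def using S by (intro borel_measurable_sum borel_measurable_diff measurable_compose[OF rv borel_measurable_indicator]) auto
  have Qpos: "Q > 0" using s by auto
  define l where "l = s / (2*Q)"
  have l: "0 < l" "l \<le> 1" using s Qpos by (auto simp: l_def field_simps)
  have key: "- l * s + Q * l\<^sup>2 = -(s\<^sup>2)/(4*Q)" using Qpos
    by (simp add: l_def field_simps power2_eq_square)
  have set_eq: "{w\<in>space M. s \<le> \<bar>real (card {i\<in>I. X i w \<in> S}) - real (card I) * q\<bar>}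
     = {w\<in>space M. fS w \<ge> s} \<union> {w\<in>space M. fS w \<le> - s}"
    by (auto simp: fS_eq)
  show "{w\<in>space M. s \<le> \<bar>real (card {i\<in>I. X i w \<in> S}) - real (card I) * q\<bar>} \<in> events"
    unfolding set_eq by measurable
  have up: "prob {w\<in>space M. fS w \<ge> s} \<le> exp (-(s\<^sup>2)/(4*Q))"
  proof -
    have "emeasure M {w\<in>space M. fS w \<ge> s} \<le> ennreal (exp (- l * s)) *
            (\<integral>\<^sup>+w. ennreal (exp (l * fS w)) * indicator (space M) w \<partial>M)"
      by (intro Chernoff_ineq_nn_integral_ge l) auto
    also have "\<dots> \<le> ennreal (exp (- l * s)) * ennreal (exp (Q * l\<^sup>2))"
      unfolding fS_def using l by (intro mult_left_mono count_mgf[OF fin indep S q Q]) auto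
    also have "\<dots> = ennreal (exp (-(s\<^sup>2)/(4*Q)))"
    proof -
      have "exp (- l * s) * exp (Q * l\<^sup>2) = exp (-(s\<^sup>2)/(4*Q))"
        by (subst mult_exp_exp) (simp only: key)
      thus ?thesis by (simp add: ennreal_mult[symmetric])
    qed
    finally have "ennreal (prob {w\<in>space M. fS w \<ge> s}) \<le> ennreal (exp (-(s\<^sup>2)/(4*Q)))"
      by (simp add: emeasure_eq_measure)
    thus ?thesis using ennreal_le_iff[OF exp_ge_zero] by blast
  qed
  have lo: "prob {w\<in>space M. fS w \<le> - s} \<le> exp (-(s\<^sup>2)/(4*Q))"
  proof -
    have "emeasure M {w\<in>space M. fS w \<le> - s} \<le> ennreal (exp (l * (- s))) *
            (\<integral>\<^sup>+w. ennreal (exp (-l * fS w)) * indicator (space M) w \<partial>M)"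
      by (intro Chernoff_ineq_nn_integral_le l) auto
    also have "\<dots> \<le> ennreal (exp (l * (- s))) * ennreal (exp (Q * (-l)\<^sup>2))"
      unfolding fS_def using l by (intro mult_left_mono count_mgf[OF fin indep S q Q]) auto
    also have "\<dots> = ennreal (exp (-(s\<^sup>2)/(4*Q)))"
    proof -
      have "exp (l * (- s)) * exp (Q * (-l)\<^sup>2) = exp (-(s\<^sup>2)/(4*Q))"
      proof -
        have "l * (- s) + Q * (-l)\<^sup>2 = -(s\<^sup>2)/(4*Q)" using key by simp
        thus ?thesis by (subst mult_exp_exp) (simp only: )
      qed
      thus ?thesis by (simp add: ennreal_mult[symmetric])
    qed
    finally have "ennreal (prob {w\<in>space M. fS w \<le> - s}) \<le> ennreal (exp (-(s\<^sup>2)/(4*Q)))"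
      by (simp add: emeasure_eq_measure)
    thus ?thesis using ennreal_le_iff[OF exp_ge_zero] by blast
  qed
  have "prob ({w\<in>space M. fS w \<ge> s} \<union> {w\<in>space M. fS w \<le> - s}) \<le>
        prob {w\<in>space M. fS w \<ge> s} + prob {w\<in>space M. fS w \<le> - s}"
    by (intro measure_Un_le) measurable
  with up lo show "prob {w\<in>space M. s \<le> \<bar>real (card {i\<in>I. X i w \<in> S}) - real (card I) * q\<bar>} \<le> 2 * exp (-(s\<^sup>2)/(4*Q))"
    unfolding set_eq by linarith
qed


lemma sorted_nth_le_iff:
  fixes s :: "real list"
  assumes "sorted s" "m < length s"
  shows "(s ! m \<le> x) = (m < length (filter (\<lambda>y. y \<le> x) s))"
  using assms
proof (induction s arbitrary: m)
  case Nil thus ?case by simp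
next
  case (Cons a t)
  show ?case
  proof (cases "a \<le> x")
    case True
    thus ?thesis using Cons by (cases m) auto
  next
    case False
    have "\<forall>y\<in>set (a#t). \<not> y \<le> x" using Cons.prems(1) False by auto
    hence "filter (\<lambda>y. y \<le> x) (a#t) = []" by (simp add: filter_empty_conv)
    moreover have "\<not> (a#t) ! m \<le> x" using \<open>\<forall>y\<in>set (a#t). \<not> y \<le> x\<close> Cons.prems(2) nth_mem by blast
    ultimately show ?thesis by simp
  qed
qed

lemma count_le_filter:
  "count_le X n w x = length (filter (\<lambda>y. y \<le> x) (sort (map (\<lambda>j. X j w) [1..<n+1])))"
proof -
  have "length (filter (\<lambda>y. y \<le> x) (sort (map (\<lambda>j. X j w) [1..<n+1])))
      = length (filter (\<lambda>y. y \<le> x) (map (\<lambda>j. X j w) [1..<n+1]))"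
    by (metis filter_sort length_sort)
  also have "\<dots> = length (filter (\<lambda>j. X j w \<le> x) [1..<n+1])"
    by (simp only: filter_map length_map comp_def)
  also have "\<dots> = card (set (filter (\<lambda>j. X j w \<le> x) [1..<n+1]))"
    by (rule distinct_card[symmetric]) (simp del: upt_Suc)
  also have "set (filter (\<lambda>j. X j w \<le> x) [1..<n+1]) = {i\<in>{1..n}. X i w \<le> x}"
    by auto
  finally show ?thesis by (simp add: count_le_def)
qed

lemma order_stat_le_iff:
  assumes "1 \<le> i" "i \<le> n"
  shows "(order_stat X n w i \<le> x) = (i \<le> count_le X n w x)"
proof -
  let ?s = "sort (map (\<lambda>j. X j w) [1..<n+1])"
  have "(order_stat X n w i \<le> x) = (i - 1 < length (filter (\<lambda>y. y \<le> x) ?s))"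
    unfolding order_stat_def using assms by (intro sorted_nth_le_iff) auto
  moreover have "\<And>L. (i - 1 < L) = (i \<le> L)" using assms by auto
  ultimately show ?thesis unfolding count_le_filter by simp
qed


lemma sum_shift_gauss:
  "(\<Sum>i\<in>{a+1..a+d}. real i - real a) = real d * (real d + 1) / 2"
proof (induction d)
  case 0 thus ?case by simp
next
  case (Suc d)
  have "{a+1..a + Suc d} = insert (a + Suc d) {a+1..a+d}" by auto
  hence "(\<Sum>i\<in>{a+1..a+Suc d}. real i - real a) = (real (a + Suc d) - real a) + (\<Sum>i\<in>{a+1..a+d}. real i - real a)"
    by simp
  also have "\<dots> = real (Suc d) * (real (Suc d) + 1) / 2" using Suc by (simp add: field_simps)
  finally show ?case .
qed

lemma sgn_sum_formula:
  fixes k N :: nat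
  shows "sgn (real N - real k) * (\<Sum>i\<in>{min k N + 1..max k N}. real i - real N)
        = - (real N - real k)\<^sup>2 / 2 + (real N - real k) / 2"
proof (cases "k \<le> N")
  case True
  define d where "d = N - k"
  have N: "N = k + d" using True by (simp add: d_def)
  have "(\<Sum>i\<in>{k+1..k+d}. real i - real N) = (\<Sum>i\<in>{k+1..k+d}. (real i - real k) - real d)"
    by (intro sum.cong) (auto simp: N)
  also have "\<dots> = (\<Sum>i\<in>{k+1..k+d}. real i - real k) - (\<Sum>i\<in>{k+1..k+d}. real d)"
    by (rule sum_subtractf)
  also have "\<dots> = real d * (real d + 1) / 2 - real d * real d"
    by (simp only: sum_shift_gauss sum_constant card_atLeastAtMost) simp
  finally have S: "(\<Sum>i\<in>{k+1..k+d}. real i - real N) = real d * (real d + 1) / 2 - real d * real d" .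
  show ?thesis
  proof (cases "d = 0")
    case True thus ?thesis using N by simp
  next
    case False
    hence "sgn (real N - real k) = 1" using N by simp
    thus ?thesis using S N True by (simp add: power2_eq_square field_simps)
  qed
next
  case False
  define d where "d = k - N"
  have k: "k = N + d" and d: "d > 0" using False by (auto simp: d_def)
  have S: "(\<Sum>i\<in>{N+1..N+d}. real i - real N) = real d * (real d + 1) / 2"
    by (rule sum_shift_gauss)
  have "sgn (real N - real k) = -1" using k d by simp
  thus ?thesis using S k by (simp add: power2_eq_square field_simps)
qed

lemma count_le_le_n: "count_le X n w x \<le> n"
proof -
  have "count_le X n w x \<le> card {1..n}" unfolding count_le_def by (intro card_mono) auto
  thus ?thesis by simp
qed


lemma core_bound:
  fixes X :: "nat \<Rightarrow> 'a \<Rightarrow> real" and F G :: "real \<Rightarrow> real" and xg :: "int \<Rightarrow> real"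
    and n k :: nat and xi p r K E T J :: real
  assumes n: "n > 0" and k: "k \<le> n" and p: "p = real k / real n"
    and Fmono: "mono F"
    and xg: "\<And>j. \<bar>real_of_int j\<bar> \<le> J \<Longrightarrow> F (xg j) = p + real_of_int j / real n"
    and cnt: "\<And>j. \<bar>real_of_int j\<bar> \<le> J \<Longrightarrow>
         \<bar>real (count_le X n w (xg j)) - real (count_le X n w xi) - real_of_int j\<bar> \<le> E"
    and J: "\<bar>real (count_le X n w xi) - real k\<bar> + E + 2 \<le> J"
    and T: "(\<bar>real (count_le X n w xi) - real k\<bar> + E + 2) / real n \<le> T"
    and taylor: "\<And>y. \<bar>F y - p\<bar> \<le> T \<Longrightarrow> \<bar>G y - G xi - r * (F y - p)\<bar> \<le> K * \<bar>F y - p\<bar> powr (3/2)"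
    and K: "K \<ge> 0" and E0: "E \<ge> 0"
  shows "\<bar>int_mean G X n k xi w + (1/2) * (real (count_le X n w xi) / real n - p)\<^sup>2 * r\<bar>
         \<le> \<bar>r\<bar> * \<bar>real (count_le X n w xi) - real k\<bar> / (2 * real n ^ 2)
           + \<bar>real (count_le X n w xi) - real k\<bar> * (\<bar>r\<bar> * (E + 2) / real n + K * T powr (3/2)) / real n"
proof -
  define N where "N = count_le X n w xi"
  define D where "D = real N - real k"
  define I where "I = {min k N + 1..max k N}"
  define s where "s i = order_stat X n w i" for i
  have Nn: "N \<le> n" unfolding N_def by (rule count_le_le_n)
  have cardI: "real (card I) = \<bar>D\<bar>" unfolding I_def D_def by (cases "k \<le> N") (simp_all add: min_def max_def of_nat_diff)
  have stepA: "\<bar>F (s i) - p - (real i - real N) / n\<bar> \<le> (E + 2) / n" if iI: "i \<in> I" for i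
  proof -
    have iI2: "min k N + 1 \<le> i" "i \<le> max k N" using iI by (simp_all add: I_def)
    have i1: "1 \<le> i" "i \<le> n" using iI2 Nn k by (simp_all add: max_def split: if_splits)
    have iN: "\<bar>real i - real N\<bar> \<le> \<bar>D\<bar>" using iI2 unfolding D_def
      by (cases "k \<le> N") (simp_all add: min_def max_def abs_le_iff)
    define c where "c = \<lceil>E\<rceil>"
    have c: "E \<le> c" "c \<le> E + 1" unfolding c_def by linarith+
    define ju where "ju = (int i - int N) + c + 1"
    have ju: "\<bar>real_of_int ju\<bar> \<le> J" using iN c J E0 unfolding ju_def D_def N_def by (simp add: abs_le_iff; linarith)
    have "real (count_le X n w (xg ju)) \<ge> real N + ju - E" using cnt[OF ju] unfolding N_def by linarith
    moreover have "real_of_int ju = real i - real N + c + 1" by (simp add: ju_def)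
    ultimately have "real i \<le> real (count_le X n w (xg ju))" using c by linarith
    hence "i \<le> count_le X n w (xg ju)" by (simp only: of_nat_le_iff)
    hence "s i \<le> xg ju" unfolding s_def by (simp only: order_stat_le_iff[OF i1])
    hence "F (s i) \<le> F (xg ju)" by (rule monoD[OF Fmono])
    hence up: "F (s i) \<le> p + real_of_int ju / n" using xg[OF ju] by simp
    define jl where "jl = (int i - int N) - c - 1"
    have jl: "\<bar>real_of_int jl\<bar> \<le> J" using iN c J E0 unfolding jl_def D_def N_def by (simp add: abs_le_iff; linarith)
    have "real (count_le X n w (xg jl)) \<le> real N + jl + E" using cnt[OF jl] unfolding N_def by linarith
    moreover have "real_of_int jl = real i - real N - c - 1" by (simp add: jl_def)
    ultimately have "\<not> real i \<le> real (count_le X n w (xg jl))" using c by linarith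
    hence "\<not> i \<le> count_le X n w (xg jl)" by simp
    hence "\<not> s i \<le> xg jl" unfolding s_def by (simp add: order_stat_le_iff[OF i1])
    hence "xg jl \<le> s i" by simp
    hence "F (xg jl) \<le> F (s i)" by (rule monoD[OF Fmono])
    hence lo: "p + real_of_int jl / n \<le> F (s i)" using xg[OF jl] by simp
    have "real_of_int ju / n = (real i - real N) / n + (c + 1) / n"
      unfolding ju_def by (simp add: add_divide_distrib diff_divide_distrib)
    moreover have "real_of_int jl / n = (real i - real N) / n - (c + 1) / n"
      unfolding jl_def by (simp add: add_divide_distrib diff_divide_distrib)
    moreover have "(c + 1) / n \<le> (E + 2) / n" using c n by (intro divide_right_mono) auto
    ultimately show ?thesis using up lo by (simp add: abs_le_iff; linarith)
  qed
  define e where "e i = G (s i) - G xi - r * ((real i - real N) / n)" for i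
  define B where "B = \<bar>r\<bar> * (E + 2) / real n + K * T powr (3/2)"
  have eB: "\<bar>e i\<bar> \<le> B" if iI: "i \<in> I" for i
  proof -
    have iI2: "min k N + 1 \<le> i" "i \<le> max k N" using iI by (simp_all add: I_def)
    have iN: "\<bar>real i - real N\<bar> \<le> \<bar>D\<bar>" using iI2 unfolding D_def
      by (cases "k \<le> N") (simp_all add: min_def max_def abs_le_iff)
    have d1: "\<bar>(real i - real N) / n\<bar> \<le> \<bar>D\<bar> / n" using iN n by (simp add: abs_divide divide_right_mono)
    have d2: "(\<bar>D\<bar> + E + 2) / n = \<bar>D\<bar> / n + (E + 2) / n" by (simp add: add_divide_distrib)
    have tri: "\<bar>F (s i) - p\<bar> \<le> \<bar>F (s i) - p - (real i - real N) / n\<bar> + \<bar>(real i - real N) / n\<bar>"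
      using abs_triangle_ineq[of "F (s i) - p - (real i - real N) / n" "(real i - real N) / n"] by simp
    have T': "(\<bar>D\<bar> + E + 2) / n \<le> T" using T by (simp add: D_def N_def)
    have FT: "\<bar>F (s i) - p\<bar> \<le> T" using stepA[OF iI] T' d1 d2 tri by linarith
    have "\<bar>F (s i) - p\<bar> powr (3/2) \<le> T powr (3/2)" using FT by (intro powr_mono2) auto
    hence tay: "\<bar>G (s i) - G xi - r * (F (s i) - p)\<bar> \<le> K * T powr (3/2)"
      using taylor[OF FT] K mult_left_mono by (smt (verit))
    have "e i = (G (s i) - G xi - r * (F (s i) - p)) + r * (F (s i) - p - (real i - real N) / n)"
      unfolding e_def by (simp add: algebra_simps)
    moreover have "\<bar>r * (F (s i) - p - (real i - real N) / n)\<bar> \<le> \<bar>r\<bar> * ((E + 2) / n)"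
      unfolding abs_mult by (intro mult_left_mono stepA[OF iI]) auto
    moreover have "\<bar>r\<bar> * ((E + 2) / n) = \<bar>r\<bar> * (E + 2) / n" by simp
    ultimately show ?thesis unfolding B_def using tay by (smt (verit))
  qed
  define Z where "Z = (\<Sum>i\<in>I. e i)"
  have Z: "\<bar>Z\<bar> \<le> \<bar>D\<bar> * B"
  proof -
    have "\<bar>Z\<bar> \<le> (\<Sum>i\<in>I. \<bar>e i\<bar>)" unfolding Z_def by (rule sum_abs)
    also have "\<dots> \<le> (\<Sum>i\<in>I. B)" by (intro sum_mono eB)
    also have "\<dots> = \<bar>D\<bar> * B" using cardI by simp
    finally show ?thesis .
  qed
  define S where "S = (\<Sum>i\<in>I. real i - real N)"
  have sumG: "(\<Sum>i\<in>I. G (s i) - G xi) = r / n * S + Z"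
  proof -
    have "(\<Sum>i\<in>I. G (s i) - G xi) = (\<Sum>i\<in>I. r / n * (real i - real N) + e i)"
      by (intro sum.cong) (simp_all add: e_def)
    also have "\<dots> = r / n * S + Z" by (simp only: sum.distrib sum_distrib_left S_def Z_def)
    finally show ?thesis .
  qed
  have IM: "int_mean G X n k xi w = sgn D / n * (\<Sum>i\<in>I. G (s i) - G xi)"
    unfolding int_mean_def Let_def N_def[symmetric] D_def I_def s_def by simp
  have sf: "sgn D * S = - D\<^sup>2 / 2 + D / 2"
    unfolding D_def I_def S_def by (rule sgn_sum_formula)
  have alg1: "\<And>a b c d (n::real). n \<noteq> 0 \<Longrightarrow> a / n * (b / n * c + d) = b / n^2 * (a * c) + a * d / n"
    by (simp add: field_simps power2_eq_square)
  have "int_mean G X n k xi w = r / real n ^ 2 * (sgn D * S) + sgn D * Z / n"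
    unfolding IM sumG using n by (intro alg1) simp
  also have "\<dots> = r / real n ^ 2 * (- D\<^sup>2 / 2 + D / 2) + sgn D * Z / n" by (simp only: sf)
  finally have IM2: "int_mean G X n k xi w = r / real n ^ 2 * (- D\<^sup>2 / 2 + D / 2) + sgn D * Z / n" .
  have Dn: "real N / n - p = D / n" using n unfolding p D_def by (simp add: diff_divide_distrib)
  have alg2: "\<And>r D Y (m::real). m \<noteq> 0 \<Longrightarrow> r / m ^ 2 * (- D\<^sup>2 / 2 + D / 2) + Y + (1/2) * (D / m)\<^sup>2 * r = r * D / (2 * m ^ 2) + Y"
    by (simp add: field_simps power2_eq_square)
  have "int_mean G X n k xi w + (1/2) * (real N / n - p)\<^sup>2 * r = r * D / (2 * real n ^ 2) + sgn D * Z / n"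
    unfolding IM2 Dn using n by (intro alg2) simp
  also have "\<bar>\<dots>\<bar> \<le> \<bar>r\<bar> * \<bar>D\<bar> / (2 * real n ^ 2) + \<bar>D\<bar> * B / n"
  proof -
    have "\<bar>sgn D * Z\<bar> \<le> \<bar>Z\<bar>" by (simp add: abs_mult abs_sgn_eq)
    also have "\<dots> \<le> \<bar>D\<bar> * B" by (rule Z)
    finally have "\<bar>sgn D * Z\<bar> / n \<le> \<bar>D\<bar> * B / n" using n by (intro divide_right_mono) auto
    hence "\<bar>sgn D * Z / n\<bar> \<le> \<bar>D\<bar> * B / n" by (simp add: abs_divide)
    moreover have "\<bar>r * D / (2 * real n ^ 2)\<bar> = \<bar>r\<bar> * \<bar>D\<bar> / (2 * real n ^ 2)" by (simp add: abs_mult)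
    moreover have "\<bar>r * D / (2 * real n ^ 2) + sgn D * Z / n\<bar> \<le> \<bar>r * D / (2 * real n ^ 2)\<bar> + \<bar>sgn D * Z / n\<bar>"
      by (rule abs_triangle_ineq)
    ultimately show ?thesis by linarith
  qed
  finally show ?thesis by (simp add: N_def D_def B_def)
qed


locale qdist =
  fixes F :: "real \<Rightarrow> real"
  assumes Fmono: "mono F"
    and Fhi: "\<And>u. u < 1 \<Longrightarrow> \<exists>x. u \<le> F x"
    and Flo: "\<And>u. 0 < u \<Longrightarrow> \<exists>x. F x < u"
begin

lemma S_ne: "u < 1 \<Longrightarrow> {x. u \<le> F x} \<noteq> {}" using Fhi by auto

lemma S_bdd: assumes "0 < u" shows "bdd_below {x. u \<le> F x}"
proof -
  obtain x0 where x0: "F x0 < u" using Flo[OF assms] by auto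
  have "x0 \<le> x" if "u \<le> F x" for x
  proof (rule ccontr)
    assume "\<not> x0 \<le> x"
    hence "F x \<le> F x0" using monoD[OF Fmono] by auto
    thus False using x0 that by auto
  qed
  thus ?thesis unfolding bdd_below_def by blast
qed

lemma quantile_le: "0 < u \<Longrightarrow> u \<le> F x \<Longrightarrow> quantile F u \<le> x"
  unfolding quantile_def by (rule cInf_lower) (auto intro: S_bdd)

lemma quantile_less: assumes "0 < u" "u < 1" "quantile F u < x" shows "u \<le> F x"
proof -
  have "\<exists>y\<in>{x. u \<le> F x}. y < x"
    using assms cInf_less_iff[OF S_ne[OF assms(2)] S_bdd[OF assms(1)]] unfolding quantile_def by blast
  then obtain y where "u \<le> F y" "y < x" by auto
  thus ?thesis using monoD[OF Fmono, of y x] by auto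
qed

lemma quantile_mono: "0 < u \<Longrightarrow> u \<le> v \<Longrightarrow> v < 1 \<Longrightarrow> quantile F u \<le> quantile F v"
  unfolding quantile_def using S_ne[of v] S_bdd[of u] by (intro cInf_superset_mono) auto

lemma F_quantile:
  assumes u: "0 < u" "u < 1" and c: "isCont F (quantile F u)"
  shows "F (quantile F u) = u"
proof -
  define y where "y = quantile F u"
  have tr: "(F \<longlongrightarrow> F y) (at_right y)" "(F \<longlongrightarrow> F y) (at_left y)"
    using c unfolding isCont_def y_def by (auto intro: tendsto_mono[OF at_le])
  have "\<forall>\<^sub>F x in at_right y. y < x" by (rule eventually_at_right_less)
  hence "\<forall>\<^sub>F x in at_right y. u \<le> F x"
    by (rule eventually_mono) (use quantile_less[OF u] in \<open>auto simp: y_def\<close>)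
  hence ge: "u \<le> F y" using tendsto_lowerbound[OF tr(1)] trivial_limit_at_right_real by blast
  have "\<forall>\<^sub>F x in at_left y. F x \<le> u"
  proof -
    have "F x \<le> u" if "x < y" for x
    proof (rule ccontr)
      assume "\<not> F x \<le> u"
      hence "y \<le> x" unfolding y_def using quantile_le[OF u(1)] by auto
      thus False using that by auto
    qed
    moreover have "\<forall>\<^sub>F x in at_left y. x < y"
      using eventually_at_left_real[of "y-1" y] by (auto elim: eventually_mono)
    ultimately show ?thesis by (auto elim: eventually_mono)
  qed
  hence le: "F y \<le> u" using tendsto_upperbound[OF tr(2)] trivial_limit_at_left_real by blast
  show ?thesis using ge le unfolding y_def by auto
qed

end


context qdist begin

lemma window:
  assumes U: "U \<subseteq> {0<..<1}" and ab: "{a0..b0} \<subseteq> U" "a0 \<le> b0"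
    and fd: "\<And>x. x \<in> quantile F ` U \<Longrightarrow> (F has_real_derivative f x) (at x) \<and> f x > 0"
    and x: "quantile F a0 \<le> x" "x \<le> quantile F b0"
  shows "quantile F (F x) = x" "a0 \<le> F x" "F x \<le> b0"
proof -
  have FQ: "F (quantile F u) = u" if "u \<in> U" for u
  proof -
    have "u \<in> {0<..<1}" using that U by auto
    moreover have "isCont F (quantile F u)" using fd[of "quantile F u"] that by (auto intro: DERIV_isCont)
    ultimately show ?thesis using F_quantile by auto
  qed
  have a0U: "a0 \<in> U" and b0U: "b0 \<in> U" using ab by auto
  have "F (quantile F a0) \<le> F x" using x monoD[OF Fmono] by blast
  thus ax: "a0 \<le> F x" using FQ[OF a0U] by simp
  have "F x \<le> F (quantile F b0)" using x monoD[OF Fmono] by blast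
  thus xb: "F x \<le> b0" using FQ[OF b0U] by simp
  define u where "u = F x"
  have uU: "u \<in> U" using ab ax xb by (auto simp: u_def)
  hence u01: "0 < u" "u < 1" using U by auto
  define y where "y = quantile F u"
  have yx: "y \<le> x" unfolding y_def using quantile_le[OF u01(1)] by (simp add: u_def)
  have Fy: "F y = u" unfolding y_def using FQ[OF uU] .
  show "quantile F (F x) = x"
  proof (rule ccontr)
    assume "quantile F (F x) \<noteq> x"
    hence yx': "y < x" using yx by (simp add: y_def u_def)
    have yU: "y \<in> quantile F ` U" using uU by (simp add: y_def)
    have "\<forall>z. \<bar>y - z\<bar> < x - y \<longrightarrow> F z \<le> F y"
    proof (intro allI impI)
      fix z assume "\<bar>y - z\<bar> < x - y"
      show "F z \<le> F y"
      proof (cases "z \<le> y")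
        case True thus ?thesis using monoD[OF Fmono] by blast
      next
        case False
        hence "z \<le> x" using \<open>\<bar>y - z\<bar> < x - y\<close> by auto
        hence "F z \<le> F x" using monoD[OF Fmono] by blast
        thus ?thesis using Fy by (simp add: u_def)
      qed
    qed
    hence "f y = 0" using fd[OF yU] yx' by (intro DERIV_local_max[of F "f y" y "x - y"]) auto
    thus False using fd[OF yU] by simp
  qed
qed

lemma window_sub:
  assumes U: "U \<subseteq> {0<..<1}" and ab: "{a0..b0} \<subseteq> U" "a0 \<le> b0"
    and fd: "\<And>x. x \<in> quantile F ` U \<Longrightarrow> (F has_real_derivative f x) (at x) \<and> f x > 0"
  shows "{quantile F a0..quantile F b0} \<subseteq> quantile F ` U"
proof
  fix x assume "x \<in> {quantile F a0..quantile F b0}"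
  hence "quantile F (F x) = x" "a0 \<le> F x" "F x \<le> b0" using window[OF U ab fd] by auto
  thus "x \<in> quantile F ` U" using ab by (metis atLeastAtMost_iff image_eqI subsetD)
qed

end


lemma powr_three_halves: "0 \<le> (t::real) \<Longrightarrow> t * t powr (1/2) = t powr (3/2)"
proof -
  assume t: "0 \<le> t"
  have "t powr (3/2) = t powr (1 + 1/2)" by simp
  also have "\<dots> = t powr 1 * t powr (1/2)" by (rule powr_add)
  also have "\<dots> = t * t powr (1/2)" using t by simp
  finally show ?thesis by simp
qed

lemma mvt_sym:
  fixes \<phi> \<phi>' :: "real \<Rightarrow> real"
  assumes "y \<noteq> \<xi>" and d: "\<And>x. min y \<xi> \<le> x \<Longrightarrow> x \<le> max y \<xi> \<Longrightarrow> (\<phi> has_real_derivative \<phi>' x) (at x)"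
  shows "\<exists>c. min y \<xi> < c \<and> c < max y \<xi> \<and> \<phi> y - \<phi> \<xi> = (y - \<xi>) * \<phi>' c"
proof (cases "y < \<xi>")
  case True
  obtain c where "y < c" "c < \<xi>" "\<phi> \<xi> - \<phi> y = (\<xi> - y) * \<phi>' c"
    using MVT2[of y \<xi> \<phi> \<phi>'] True d by auto
  thus ?thesis using True by (intro exI[of _ c]) (auto simp: algebra_simps)
next
  case False
  hence "\<xi> < y" using assms(1) by auto
  then obtain c where "\<xi> < c" "c < y" "\<phi> y - \<phi> \<xi> = (y - \<xi>) * \<phi>' c"
    using MVT2[of \<xi> y \<phi> \<phi>'] d by auto
  thus ?thesis using \<open>\<xi> < y\<close> by (intro exI[of _ c]) auto
qed

lemma taylor_holder:
  fixes F G f g :: "real \<Rightarrow> real"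
  assumes dF: "\<And>x. xa \<le> x \<Longrightarrow> x \<le> xb \<Longrightarrow> (F has_real_derivative f x) (at x)"
    and dG: "\<And>x. xa \<le> x \<Longrightarrow> x \<le> xb \<Longrightarrow> (G has_real_derivative g x) (at x)"
    and m: "0 < m" and fm: "\<And>x. xa \<le> x \<Longrightarrow> x \<le> xb \<Longrightarrow> m \<le> f x"
    and Hf: "\<And>x y. xa \<le> x \<Longrightarrow> x \<le> xb \<Longrightarrow> xa \<le> y \<Longrightarrow> y \<le> xb \<Longrightarrow> \<bar>f x - f y\<bar> \<le> Lf * \<bar>x - y\<bar> powr (1/2)"
    and Hg: "\<And>x y. xa \<le> x \<Longrightarrow> x \<le> xb \<Longrightarrow> xa \<le> y \<Longrightarrow> y \<le> xb \<Longrightarrow> \<bar>g x - g y\<bar> \<le> Lg * \<bar>x - y\<bar> powr (1/2)"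
    and Lf: "0 \<le> Lf" and Lg: "0 \<le> Lg"
    and Mg: "\<bar>g \<xi>\<bar> \<le> Mg"
    and \<xi>: "xa \<le> \<xi>" "\<xi> \<le> xb" and y: "xa \<le> y" "y \<le> xb"
  shows "\<bar>G y - G \<xi> - (g \<xi> / f \<xi>) * (F y - F \<xi>)\<bar>
           \<le> ((Lg + Mg * Lf / m) / m powr (3/2)) * \<bar>F y - F \<xi>\<bar> powr (3/2)"
proof (cases "y = \<xi>")
  case True thus ?thesis by simp
next
  case False
  have inW: "xa \<le> z \<and> z \<le> xb" if "min y \<xi> \<le> z" "z \<le> max y \<xi>" for z
    using that \<xi> y by auto
  obtain c where c: "min y \<xi> < c" "c < max y \<xi>" "G y - G \<xi> = (y - \<xi>) * g c"
    using mvt_sym[OF False, of G g] dG inW by blast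
  obtain d where d: "min y \<xi> < d" "d < max y \<xi>" "F y - F \<xi> = (y - \<xi>) * f d"
    using mvt_sym[OF False, of F f] dF inW by blast
  have cW: "xa \<le> c" "c \<le> xb" and dW: "xa \<le> d" "d \<le> xb" using inW c d by auto
  define t where "t = \<bar>y - \<xi>\<bar>"
  have t0: "t > 0" using False by (simp add: t_def)
  have ct: "\<bar>c - \<xi>\<bar> \<le> t" and dt: "\<bar>d - \<xi>\<bar> \<le> t" using c d by (auto simp: t_def)
  have fxi: "m \<le> f \<xi>" using fm \<xi> by auto
  define r where "r = g \<xi> / f \<xi>"
  have r: "\<bar>r\<bar> \<le> Mg / m"
  proof -
    have "\<bar>r\<bar> = \<bar>g \<xi>\<bar> / f \<xi>" using fxi m by (simp add: r_def abs_divide)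
    also have "\<dots> \<le> Mg / f \<xi>" using Mg fxi m by (intro divide_right_mono) auto
    also have "\<dots> \<le> Mg / m" using Mg fxi m by (intro divide_left_mono) auto
    finally show ?thesis .
  qed
  have hc: "\<bar>g c - g \<xi>\<bar> \<le> Lg * t powr (1/2)"
    using Hg[OF cW \<xi>] ct Lg by (smt (verit) mult_left_mono powr_mono2 abs_ge_zero divide_pos_pos zero_less_numeral zero_less_one)
  have hd: "\<bar>f d - f \<xi>\<bar> \<le> Lf * t powr (1/2)"
    using Hf[OF dW \<xi>] dt Lf by (smt (verit) mult_left_mono powr_mono2 abs_ge_zero divide_pos_pos zero_less_numeral zero_less_one)
  have "r * f \<xi> = g \<xi>" unfolding r_def using fxi m by simp
  hence rf: "g \<xi> = r * f \<xi>" by simp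
  have "G y - G \<xi> - r * (F y - F \<xi>) = (y - \<xi>) * g c - r * ((y - \<xi>) * f d)"
    using c(3) d(3) by simp
  also have "\<dots> = (y - \<xi>) * ((g c - g \<xi>) - r * (f d - f \<xi>))"
    unfolding rf by (simp add: algebra_simps)
  finally have eq: "G y - G \<xi> - r * (F y - F \<xi>) = (y - \<xi>) * ((g c - g \<xi>) - r * (f d - f \<xi>))" .
  have "\<bar>(g c - g \<xi>) - r * (f d - f \<xi>)\<bar> \<le> \<bar>g c - g \<xi>\<bar> + \<bar>r\<bar> * \<bar>f d - f \<xi>\<bar>"
    by (simp add: abs_mult[symmetric] abs_triangle_ineq4)
  also have "\<dots> \<le> Lg * t powr (1/2) + (Mg / m) * (Lf * t powr (1/2))"
    using hc hd r by (intro add_mono mult_mono) auto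
  also have "\<dots> = (Lg + Mg * Lf / m) * t powr (1/2)" by (simp add: algebra_simps)
  finally have inner: "\<bar>(g c - g \<xi>) - r * (f d - f \<xi>)\<bar> \<le> (Lg + Mg * Lf / m) * t powr (1/2)" .
  have K0: "0 \<le> Lg + Mg * Lf / m" using Lg Lf m Mg by (smt (verit) abs_ge_zero divide_nonneg_pos mult_nonneg_nonneg)
  have "\<bar>G y - G \<xi> - r * (F y - F \<xi>)\<bar> = t * \<bar>(g c - g \<xi>) - r * (f d - f \<xi>)\<bar>"
    unfolding eq t_def by (simp add: abs_mult)
  also have "\<dots> \<le> t * ((Lg + Mg * Lf / m) * t powr (1/2))"
    using inner t0 by (intro mult_left_mono) auto
  also have "\<dots> = (Lg + Mg * Lf / m) * t powr (3/2)"
    using powr_three_halves[of t] t0 by (simp add: algebra_simps)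
  finally have A: "\<bar>G y - G \<xi> - r * (F y - F \<xi>)\<bar> \<le> (Lg + Mg * Lf / m) * t powr (3/2)" .
  have fd_m: "m \<le> f d" using fm dW by auto
  have "m * t \<le> f d * t" using fd_m t0 by (intro mult_right_mono) auto
  also have "f d * t = \<bar>F y - F \<xi>\<bar>" using d(3) fd_m m by (simp add: t_def abs_mult)
  finally have "t \<le> \<bar>F y - F \<xi>\<bar> / m" using m by (simp add: field_simps)
  hence "t powr (3/2) \<le> (\<bar>F y - F \<xi>\<bar> / m) powr (3/2)" using t0 by (intro powr_mono2) auto
  also have "\<dots> = \<bar>F y - F \<xi>\<bar> powr (3/2) / m powr (3/2)" using m by (simp add: powr_divide)
  finally have B: "t powr (3/2) \<le> \<bar>F y - F \<xi>\<bar> powr (3/2) / m powr (3/2)" .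
  have "(Lg + Mg * Lf / m) * t powr (3/2) \<le> (Lg + Mg * Lf / m) * (\<bar>F y - F \<xi>\<bar> powr (3/2) / m powr (3/2))"
    using B K0 by (intro mult_left_mono) auto
  also have "\<dots> = ((Lg + Mg * Lf / m) / m powr (3/2)) * \<bar>F y - F \<xi>\<bar> powr (3/2)" by simp
  finally show ?thesis using A unfolding r_def by linarith
qed


lemma holder_half:
  assumes H: "holder_on S \<alpha> h" and \<alpha>: "\<alpha> \<ge> 1/2" and W: "W \<subseteq> S" "W \<subseteq> {xa..xb}"
  shows "\<exists>L\<ge>0. \<forall>x\<in>W. \<forall>y\<in>W. \<bar>h x - h y\<bar> \<le> L * \<bar>x - y\<bar> powr (1/2)"
proof -
  obtain L0 where L0: "\<And>x y. x \<in> S \<Longrightarrow> y \<in> S \<Longrightarrow> \<bar>h x - h y\<bar> \<le> L0 * \<bar>x - y\<bar> powr \<alpha>"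
    using H unfolding holder_on_def by blast
  define L where "L = max L0 0 * (xb - xa + 1) powr (\<alpha> - 1/2)"
  have "\<bar>h x - h y\<bar> \<le> L * \<bar>x - y\<bar> powr (1/2)" if xy: "x \<in> W" "y \<in> W" for x y
  proof (cases "x = y")
    case True thus ?thesis by simp
  next
    case False
    define t where "t = \<bar>x - y\<bar>"
    have t0: "0 < t" using False by (simp add: t_def)
    have "x \<in> {xa..xb}" "y \<in> {xa..xb}" using xy W by auto
    hence tb: "t \<le> xb - xa + 1" by (auto simp: t_def abs_le_iff)
    have "t powr \<alpha> = t powr (1/2 + (\<alpha> - 1/2))" by simp
    also have "\<dots> = t powr (1/2) * t powr (\<alpha> - 1/2)" by (rule powr_add)
    also have "\<dots> \<le> t powr (1/2) * (xb - xa + 1) powr (\<alpha> - 1/2)"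
      using t0 tb \<alpha> by (intro mult_left_mono powr_mono2) auto
    finally have tp: "t powr \<alpha> \<le> t powr (1/2) * (xb - xa + 1) powr (\<alpha> - 1/2)" .
    have "\<bar>h x - h y\<bar> \<le> L0 * t powr \<alpha>" using L0 xy W unfolding t_def by auto
    also have "\<dots> \<le> max L0 0 * t powr \<alpha>" by (intro mult_right_mono) auto
    also have "\<dots> \<le> max L0 0 * (t powr (1/2) * (xb - xa + 1) powr (\<alpha> - 1/2))"
      using tp by (intro mult_left_mono) auto
    also have "\<dots> = L * t powr (1/2)" by (simp add: L_def)
    finally show ?thesis by (simp add: t_def)
  qed
  moreover have "L \<ge> 0" unfolding L_def by simp
  ultimately show ?thesis by blast
qed

lemma holder_half_cont:
  assumes L: "0 \<le> L" and H: "\<And>x y. x \<in> W \<Longrightarrow> y \<in> W \<Longrightarrow> \<bar>h x - h y\<bar> \<le> L * \<bar>x - y\<bar> powr (1/2)"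
  shows "continuous_on W (h :: real \<Rightarrow> real)"
  unfolding continuous_on_iff
proof (intro ballI allI impI)
  fix x e :: real assume x: "x \<in> W" and e: "0 < e"
  define d where "d = (e / (L + 1))\<^sup>2"
  have d: "d > 0" using e L by (simp add: d_def)
  show "\<exists>d>0. \<forall>x'\<in>W. dist x' x < d \<longrightarrow> dist (h x') (h x) < e"
  proof (intro exI[of _ d] conjI ballI impI d)
    fix x' assume x': "x' \<in> W" and dd: "dist x' x < d"
    have "\<bar>x' - x\<bar> powr (1/2) = sqrt \<bar>x' - x\<bar>" by (simp add: powr_half_sqrt)
    also have "\<dots> < sqrt d" using dd by (simp add: dist_real_def)
    also have "\<dots> = e / (L + 1)" using e L by (simp add: d_def)
    finally have s: "\<bar>x' - x\<bar> powr (1/2) < e / (L + 1)" .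
    have "\<bar>h x' - h x\<bar> \<le> L * \<bar>x' - x\<bar> powr (1/2)" using H x x' by auto
    also have "\<dots> \<le> (L + 1) * \<bar>x' - x\<bar> powr (1/2)" by (intro mult_right_mono) auto
    also have "\<dots> < (L + 1) * (e / (L + 1))" using s L by (intro mult_strict_left_mono) auto
    also have "\<dots> = e" using L by simp
    finally show "dist (h x') (h x) < e" by (simp add: dist_real_def)
  qed
qed


lemma count_le_split:
  assumes "y \<le> x"
  shows "count_le X n w x = count_le X n w y + card {i\<in>{1..n}. X i w \<in> {y<..x}}"
proof -
  have "{i\<in>{1..n}. X i w \<le> x} = {i\<in>{1..n}. X i w \<le> y} \<union> {i\<in>{1..n}. X i w \<in> {y<..x}}"
    using assms by auto
  moreover have "{i\<in>{1..n}. X i w \<le> y} \<inter> {i\<in>{1..n}. X i w \<in> {y<..x}} = {}" by auto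
  ultimately show ?thesis unfolding count_le_def by (simp add: card_Un_disjoint)
qed

lemma ecdf_count: "ecdf X n w x = real (count_le X n w x) / real n"
  unfolding ecdf_def count_le_def ..

lemma final_arith:
  fixes n :: nat and s1 s2 c1 c2 Dabs r E K T Mm :: real
  assumes n: "n > 0" and s: "0 \<le> s2" "s2 \<le> s1" "1 / n \<le> s2"
    and D: "0 \<le> Dabs" "Dabs \<le> c1 * n * s1" and r: "\<bar>r\<bar> \<le> Mm"
    and E: "E = c2 * n * s2" and T: "T = (c1 + c2 + 2) * s1" and K: "K \<ge> 0"
    and c: "c1 \<ge> 0" "c2 \<ge> 0"
  shows "\<bar>r\<bar> * Dabs / (2 * real n ^ 2) + Dabs * (\<bar>r\<bar> * (E + 2) / real n + K * T powr (3/2)) / real n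
         \<le> (Mm * c1 * (1/2 + c2 + 2)) * (s1 * s2) + c1 * K * (c1 + c2 + 2) powr (3/2) * (s1 * s1 powr (3/2))"
proof -
  define \<delta> where "\<delta> = Dabs / n"
  have \<delta>: "0 \<le> \<delta>" "\<delta> \<le> c1 * s1" using D n by (auto simp: \<delta>_def field_simps)
  have Mm: "0 \<le> Mm" using r by linarith
  have s1: "0 \<le> s1" using s by linarith
  have e1: "\<bar>r\<bar> * Dabs / (2 * real n ^ 2) = \<bar>r\<bar> * \<delta> * (1 / n) / 2"
    using n by (simp add: \<delta>_def power2_eq_square field_simps)
  have e2: "Dabs * (\<bar>r\<bar> * (E + 2) / real n + K * T powr (3/2)) / real n
      = \<delta> * (\<bar>r\<bar> * (c2 * s2 + 2 * (1 / n))) + \<delta> * (K * T powr (3/2))"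
    using n by (simp add: \<delta>_def E field_simps)
  have t1: "\<bar>r\<bar> * \<delta> * (1 / n) / 2 \<le> Mm * (c1 * s1) * s2 / 2"
    using r \<delta> s by (intro divide_right_mono mult_mono) auto
  have t2: "\<delta> * (\<bar>r\<bar> * (c2 * s2 + 2 * (1 / n))) \<le> (c1 * s1) * (Mm * (c2 * s2 + 2 * s2))"
    using r \<delta> s c Mm by (intro mult_mono add_mono) auto
  have Tp: "T powr (3/2) = (c1 + c2 + 2) powr (3/2) * s1 powr (3/2)"
    unfolding T using c s1 by (simp add: powr_mult)
  have t3: "\<delta> * (K * T powr (3/2)) \<le> (c1 * s1) * (K * T powr (3/2))"
    using \<delta> K by (intro mult_right_mono) auto
  have "\<bar>r\<bar> * Dabs / (2 * real n ^ 2) + Dabs * (\<bar>r\<bar> * (E + 2) / real n + K * T powr (3/2)) / real n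
      \<le> Mm * (c1 * s1) * s2 / 2 + (c1 * s1) * (Mm * (c2 * s2 + 2 * s2)) + (c1 * s1) * (K * T powr (3/2))"
    unfolding e1 e2 using t1 t2 t3 by linarith
  also have "\<dots> = (Mm * c1 * (1/2 + c2 + 2)) * (s1 * s2) + c1 * K * (c1 + c2 + 2) powr (3/2) * (s1 * s1 powr (3/2))"
    unfolding Tp by (simp add: algebra_simps)
  finally show ?thesis .
qed


lemma L_facts:
  fixes n :: nat
  assumes n3: "n \<ge> 3"
  defines "L \<equiv> ln (real n) / real n"
  shows "0 < L" "L \<le> 1" "1 / real n \<le> L" "real n * L = ln (real n)" "ln (real n) \<ge> 1"
proof -
  have n0: "real n > 0" using n3 by simp
  have "exp 1 \<le> real n" using exp_le n3 by linarith
  thus l1: "ln (real n) \<ge> 1" using n0 by (simp add: ln_ge_iff)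
  show "0 < L" unfolding L_def using l1 n0 by (intro divide_pos_pos) linarith+
  have "ln (real n) \<le> real n - 1" using ln_le_minus_one n0 by blast
  thus "L \<le> 1" using n0 by (simp add: L_def field_simps)
  show "1 / real n \<le> L" using l1 n0 by (simp add: L_def divide_right_mono)
  show "real n * L = ln (real n)" using n0 by (simp add: L_def)
qed

lemma s_facts:
  fixes L :: real and n :: real
  assumes L: "0 < L" "L \<le> 1" "1 / n \<le> L" and n: "n \<ge> 1"
  shows "L powr (3/4) \<le> L powr (1/2)" "1 / n \<le> L powr (3/4)" "0 \<le> L powr (3/4)"
    "L powr (1/2) * L powr (3/4) = L powr (5/4)"
    "L powr (1/2) * (L powr (1/2)) powr (3/2) = L powr (5/4)"
    "(L powr (3/4))\<^sup>2 = L * L powr (1/2)"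
    "(L powr (1/2))\<^sup>2 = L"
    "L powr (1/2) \<le> 1"
proof -
  show "L powr (3/4) \<le> L powr (1/2)" using L by (intro powr_mono') auto
  have "1 / n \<le> 1" using n by simp
  have "(1/n) powr 1 \<le> (1/n) powr (3/4)" using n by (intro powr_mono') auto
  also have "\<dots> \<le> L powr (3/4)" using L n by (intro powr_mono2) auto
  finally show "1 / n \<le> L powr (3/4)" using n by simp
  show "0 \<le> L powr (3/4)" by simp
  show "L powr (1/2) * L powr (3/4) = L powr (5/4)"
    by (simp add: powr_add[symmetric])
  show "L powr (1/2) * (L powr (1/2)) powr (3/2) = L powr (5/4)"
    by (simp add: powr_powr powr_add[symmetric])
  show "(L powr (3/4))\<^sup>2 = L * L powr (1/2)"
  proof -
    have "(L powr (3/4))\<^sup>2 = L powr (3/4) * L powr (3/4)" by (simp add: power2_eq_square)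
    also have "\<dots> = L powr (1 + 1/2)" by (simp add: powr_add[symmetric])
    also have "\<dots> = L powr 1 * L powr (1/2)" by (rule powr_add)
    also have "\<dots> = L * L powr (1/2)" using L by simp
    finally show ?thesis .
  qed
  show "(L powr (1/2))\<^sup>2 = L" using L by (simp add: powr_half_sqrt)
  show "L powr (1/2) \<le> 1" using L by (simp add: powr_half_sqrt)
qed


lemma good_bound:
  fixes X :: "nat \<Rightarrow> 'a \<Rightarrow> real" and F G :: "real \<Rightarrow> real" and n k Jn :: nat
    and xg :: "int \<Rightarrow> real"
  assumes n3: "n \<ge> 3" and kn: "k \<le> n" and Fmono: "mono F"
    and Ldef: "L = ln (real n) / real n" and s1def: "s1 = L powr (1/2)" and s2def: "s2 = L powr (3/4)"
    and pdef: "p = real k / real n"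
    and Jdef: "J = \<lceil>(c1 + c2) * real n * s1\<rceil> + 2" and Jn: "Jn = nat J"
    and Edef: "E = c2 * real n * s2" and Tdef: "T = (c1 + c2 + 2) * s1"
    and c: "c1 \<ge> 0" "c2 \<ge> 0"
    and xg: "\<And>j. \<bar>real_of_int j\<bar> \<le> J \<Longrightarrow> F (xg j) = p + real_of_int j / real n"
    and xg0: "xg 0 = xi"
    and xgpos: "\<And>j. \<bar>real_of_int j\<bar> \<le> J \<Longrightarrow> 0 \<le> j \<Longrightarrow> xi \<le> xg j"
    and xgneg: "\<And>j. \<bar>real_of_int j\<bar> \<le> J \<Longrightarrow> j \<le> 0 \<Longrightarrow> xg j \<le> xi"
    and Fxi: "F xi = p"
    and taylor: "\<And>y. \<bar>F y - p\<bar> \<le> T \<Longrightarrow> \<bar>G y - G xi - r * (F y - p)\<bar> \<le> K * \<bar>F y - p\<bar> powr (3/2)"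
    and r: "\<bar>r\<bar> \<le> Mm" and K: "K \<ge> 0"
    and g0: "\<bar>real (card {i\<in>{1..n}. X i w \<in> {..xi}}) - real n * p\<bar> < c1 * real n * s1"
    and gp: "\<And>m. m \<in> {1..Jn} \<Longrightarrow> \<bar>real (card {i\<in>{1..n}. X i w \<in> {xi<..xg (int m)}}) - real n * (real m / real n)\<bar> < E"
    and gm: "\<And>m. m \<in> {1..Jn} \<Longrightarrow> \<bar>real (card {i\<in>{1..n}. X i w \<in> {xg (- int m)<..xi}}) - real n * (real m / real n)\<bar> < E"
  shows "\<bar>int_mean G X n k xi w + (1/2) * (ecdf X n w xi - F xi)\<^sup>2 * r\<bar>
         \<le> ((Mm * c1 * (1/2 + c2 + 2)) + c1 * K * (c1 + c2 + 2) powr (3/2)) * L powr (5/4)"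
proof -
  have n0: "real n > 0" using n3 by simp
  have Lf: "0 < L" "L \<le> 1" "1 / real n \<le> L" using L_facts[OF n3] unfolding Ldef by auto
  have n1: "real n \<ge> 1" using n3 by simp
  note sf = s_facts[OF Lf n1]
  have s21: "s2 \<le> s1" and s2n: "1 / real n \<le> s2" and s20: "0 \<le> s2"
    using sf unfolding s1def s2def by auto
  have s10: "0 \<le> s1" using s20 s21 by linarith
  define N where "N = count_le X n w xi"
  have N_eq: "card {i\<in>{1..n}. X i w \<in> {..xi}} = N" unfolding N_def count_le_def by simp
  have np: "real n * p = real k" using n0 by (simp add: pdef)
  have D: "\<bar>real N - real k\<bar> < c1 * real n * s1" using g0 unfolding N_eq np .
  have E0: "E \<ge> 0" unfolding Edef using c s20 by simp
  have c2n: "0 \<le> c2 * real n" using c n0 by simp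
  have Es: "E \<le> c2 * real n * s1" unfolding Edef using mult_left_mono[OF s21 c2n] .
  have "(c1 + c2) * real n * s1 \<le> of_int \<lceil>(c1 + c2) * real n * s1\<rceil>" by (rule le_of_int_ceiling)
  hence Jge: "(c1 + c2) * real n * s1 + 2 \<le> J" unfolding Jdef by simp
  have "0 \<le> (c1 + c2) * real n * s1" using c n0 s10 by simp
  hence J0: "J \<ge> 0" using Jge by linarith
  have cnt: "\<bar>real (count_le X n w (xg j)) - real (count_le X n w xi) - real_of_int j\<bar> \<le> E"
    if j: "\<bar>real_of_int j\<bar> \<le> J" for j
  proof (cases "j = 0")
    case True thus ?thesis using E0 xg0 by simp
  next
    case False
    show ?thesis
    proof (cases "j > 0")
      case True
      define m where "m = nat j"
      have jm: "j = int m" using True by (simp add: m_def)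
      have mJ: "m \<in> {1..Jn}" using True j unfolding m_def Jn by auto
      have "count_le X n w (xg j) = count_le X n w xi + card {i\<in>{1..n}. X i w \<in> {xi<..xg j}}"
        using xgpos[OF j] True by (intro count_le_split) auto
      moreover have "\<bar>real (card {i\<in>{1..n}. X i w \<in> {xi<..xg j}}) - real m\<bar> < E"
        using gp[OF mJ] n0 unfolding jm by simp
      ultimately show ?thesis unfolding jm by simp
    next
      case False
      hence jneg: "j < 0" using \<open>j \<noteq> 0\<close> by simp
      define m where "m = nat (- j)"
      have jm: "j = - int m" using jneg by (simp add: m_def)
      have mJ: "m \<in> {1..Jn}" using jneg j unfolding m_def Jn by auto
      have "count_le X n w xi = count_le X n w (xg j) + card {i\<in>{1..n}. X i w \<in> {xg j<..xi}}"
        using xgneg[OF j] jneg by (intro count_le_split) auto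
      moreover have "\<bar>real (card {i\<in>{1..n}. X i w \<in> {xg j<..xi}}) - real m\<bar> < E"
        using gm[OF mJ] n0 unfolding jm by simp
      ultimately show ?thesis unfolding jm by simp
    qed
  qed
  have Jc: "\<bar>real (count_le X n w xi) - real k\<bar> + E + 2 \<le> J"
    using D Es Jge unfolding N_def by (simp add: algebra_simps)
  have Tc: "(\<bar>real (count_le X n w xi) - real k\<bar> + E + 2) / real n \<le> T"
  proof -
    have "\<bar>real (count_le X n w xi) - real k\<bar> + E + 2 \<le> (c1 + c2) * real n * s1 + 2"
      using D Es unfolding N_def by (simp add: algebra_simps)
    hence "(\<bar>real (count_le X n w xi) - real k\<bar> + E + 2) / real n \<le> ((c1 + c2) * real n * s1 + 2) / real n"
      using n0 by (intro divide_right_mono) auto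
    also have "\<dots> = (c1 + c2) * s1 + 2 * (1 / real n)" using n0 by (simp add: field_simps)
    also have "\<dots> \<le> (c1 + c2) * s1 + 2 * s1" using s2n s21 by simp
    also have "\<dots> = T" unfolding Tdef by (simp add: algebra_simps)
    finally show ?thesis .
  qed
  have core: "\<bar>int_mean G X n k xi w + (1/2) * (real (count_le X n w xi) / real n - p)\<^sup>2 * r\<bar>
         \<le> \<bar>r\<bar> * \<bar>real (count_le X n w xi) - real k\<bar> / (2 * real n ^ 2)
           + \<bar>real (count_le X n w xi) - real k\<bar> * (\<bar>r\<bar> * (E + 2) / real n + K * T powr (3/2)) / real n"
    using n3 kn by (intro core_bound[OF _ _ pdef Fmono xg cnt Jc Tc taylor K E0]) auto
  have fin: "\<bar>r\<bar> * \<bar>real (count_le X n w xi) - real k\<bar> / (2 * real n ^ 2)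
           + \<bar>real (count_le X n w xi) - real k\<bar> * (\<bar>r\<bar> * (E + 2) / real n + K * T powr (3/2)) / real n
         \<le> (Mm * c1 * (1/2 + c2 + 2)) * (s1 * s2) + c1 * K * (c1 + c2 + 2) powr (3/2) * (s1 * s1 powr (3/2))"
    using n3 s20 s21 s2n D r Edef Tdef K c unfolding N_def by (intro final_arith) auto
  have e1: "s1 * s2 = L powr (5/4)" and e2: "s1 * s1 powr (3/2) = L powr (5/4)"
    using sf unfolding s1def s2def by auto
  have "ecdf X n w xi - F xi = real (count_le X n w xi) / real n - p" by (simp add: ecdf_count Fxi)
  hence "\<bar>int_mean G X n k xi w + (1/2) * (ecdf X n w xi - F xi)\<^sup>2 * r\<bar>
     \<le> (Mm * c1 * (1/2 + c2 + 2)) * L powr (5/4) + c1 * K * (c1 + c2 + 2) powr (3/2) * L powr (5/4)"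
    using core fin unfolding e1 e2 by simp
  thus ?thesis by (simp add: algebra_simps)
qed


lemma (in prob_space) prob_interval:
  fixes Z :: "'a \<Rightarrow> real"
  assumes rv: "random_variable borel Z" and F: "\<And>x. prob {w\<in>space M. Z w \<le> x} = F x" and ab: "a \<le> b"
  shows "prob {w\<in>space M. Z w \<in> {a<..b}} = F b - F a"
proof -
  have "{w\<in>space M. Z w \<in> {a<..b}} = {w\<in>space M. Z w \<le> b} - {w\<in>space M. Z w \<le> a}"
    using ab by auto
  moreover have "{w\<in>space M. Z w \<le> b} \<in> events" "{w\<in>space M. Z w \<le> a} \<in> events"
    using rv by measurable
  moreover have "{w\<in>space M. Z w \<le> a} \<subseteq> {w\<in>space M. Z w \<le> b}" using ab by auto
  ultimately show ?thesis using F by (simp add: finite_measure_Diff)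
qed

lemma exp_neg_ln: "0 < (n::real) \<Longrightarrow> exp (- (x * ln n)) = n powr (- x)"
  by (simp add: powr_def)

lemma (in prob_space) per_n_prob:
  fixes X :: "nat \<Rightarrow> 'a \<Rightarrow> real" and F :: "real \<Rightarrow> real" and n k Jn :: nat
    and xg :: "int \<Rightarrow> real"
  assumes indep: "indep_vars (\<lambda>_. borel) X {1..}"
    and distF: "\<And>i x. i \<ge> 1 \<Longrightarrow> prob {w\<in>space M. X i w \<le> x} = F x"
    and n3: "n \<ge> 3" and kn: "k \<le> n" and c: "c > 0"
    and c1def: "c1 = 2 * sqrt c" and c2def: "c2 = 4 * (c + 1) + c1 + 3"
    and Ldef: "L = ln (real n) / real n" and s1def: "s1 = L powr (1/2)" and s2def: "s2 = L powr (3/4)"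
    and pdef: "p = real k / real n"
    and Jdef: "J = \<lceil>(c1 + c2) * real n * s1\<rceil> + 2" and Jn: "Jn = nat J"
    and Edef: "E = c2 * real n * s2"
    and small: "(c1 + c2 + 3) * s1 \<le> 1"
    and xg: "\<And>j. \<bar>real_of_int j\<bar> \<le> J \<Longrightarrow> F (xg j) = p + real_of_int j / real n"
    and xgpos: "\<And>j. \<bar>real_of_int j\<bar> \<le> J \<Longrightarrow> 0 \<le> j \<Longrightarrow> xi \<le> xg j"
    and xgneg: "\<And>j. \<bar>real_of_int j\<bar> \<le> J \<Longrightarrow> j \<le> 0 \<Longrightarrow> xg j \<le> xi"
    and Fxi: "F xi = p"
  shows "\<exists>B\<in>sets M. (\<forall>w\<in>space M. w \<notin> B \<longrightarrow>
            \<bar>real (card {i\<in>{1..n}. X i w \<in> {..xi}}) - real n * p\<bar> < c1 * real n * s1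
          \<and> (\<forall>m\<in>{1..Jn}. \<bar>real (card {i\<in>{1..n}. X i w \<in> {xi<..xg (int m)}}) - real n * (real m / real n)\<bar> < E)
          \<and> (\<forall>m\<in>{1..Jn}. \<bar>real (card {i\<in>{1..n}. X i w \<in> {xg (- int m)<..xi}}) - real n * (real m / real n)\<bar> < E))
        \<and> measure M B \<le> (2 + 4 * (c1 + c2 + 3)) * real n powr (- c)"
proof -
  have rv: "\<And>i. i \<in> {1..n} \<Longrightarrow> random_variable borel (X i)" using indep by (auto simp: indep_vars_def)
  have indn: "indep_vars (\<lambda>_. borel) X {1..n}" by (rule indep_vars_subset[OF indep]) auto
  have n0: "real n > 0" using n3 by simp
  have Lf: "0 < L" "L \<le> 1" "1 / real n \<le> L" "real n * L = ln (real n)" "ln (real n) \<ge> 1"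
    using L_facts[OF n3] unfolding Ldef by auto
  have n1: "real n \<ge> 1" using n3 by simp
  note sf = s_facts[OF Lf(1-3) n1]
  have s21: "s2 \<le> s1" and s2n: "1 / real n \<le> s2" and s20: "0 \<le> s2" and s1sq: "s1\<^sup>2 = L"
    and s2sq: "s2\<^sup>2 = L * s1" and s1le: "s1 \<le> 1"
    using sf unfolding s1def s2def by auto
  have s2pos: "0 < s2" using s2n n0 by (smt (verit) divide_pos_pos)
  have s1pos: "0 < s1" using s2pos s21 by linarith
  have c1pos: "c1 > 0" using c c1def by simp
  have c2pos: "c2 > 0" using c c1pos c2def by simp
  define c3 where "c3 = c1 + c2 + 3"
  have ns1: "1 \<le> real n * s1"
  proof -
    have "(real n * s1)\<^sup>2 = real n * (real n * s1\<^sup>2)" by (simp add: power2_eq_square algebra_simps)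
    also have "\<dots> = real n * ln (real n)" using Lf(4) s1sq by simp
    also have "\<dots> \<ge> 1" using n1 Lf(5) mult_mono[of 1 "real n" 1 "ln (real n)"] by simp
    finally have "1\<^sup>2 \<le> (real n * s1)\<^sup>2" by simp
    thus ?thesis using power2_le_imp_le[of 1 "real n * s1"] n0 s1pos by simp
  qed
  have Jge: "(c1 + c2) * real n * s1 + 2 \<le> J"
  proof -
    have "(c1 + c2) * real n * s1 \<le> of_int \<lceil>(c1 + c2) * real n * s1\<rceil>" by (rule le_of_int_ceiling)
    thus ?thesis unfolding Jdef by simp
  qed
  have Jle: "J \<le> c3 * real n * s1"
  proof -
    have "of_int \<lceil>(c1 + c2) * real n * s1\<rceil> \<le> (c1 + c2) * real n * s1 + 1" by (rule of_int_ceiling_le_add_one)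
    hence "J \<le> (c1 + c2) * real n * s1 + 3" unfolding Jdef by (simp; linarith)
    also have "\<dots> \<le> (c1 + c2) * real n * s1 + 3 * (real n * s1)" using ns1 by simp
    also have "\<dots> = c3 * real n * s1" by (simp add: c3_def algebra_simps)
    finally show ?thesis .
  qed
  have nn1: "0 \<le> c1 * real n * s1" "0 \<le> c2 * real n * s1" using c1pos c2pos n0 s1pos by simp_all
  have sp: "(c1 + c2) * real n * s1 = c1 * real n * s1 + c2 * real n * s1" by (simp add: algebra_simps)
  have Jpos: "J > 0" using Jge nn1 sp by linarith
  have c2n: "0 \<le> c2 * real n" using c2pos n0 by simp
  have Es: "E \<le> c2 * real n * s1" unfolding Edef using mult_left_mono[OF s21 c2n] .
  have Epos: "E > 0" unfolding Edef using s2pos c2pos n0 by simp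
  have EJ: "E \<le> 2 * real_of_int J" using Es Jge nn1 sp by linarith
  have JnJ: "real Jn = J" using Jpos unfolding Jn by simp
  define B0 where "B0 = {w\<in>space M. c1 * real n * s1 \<le> \<bar>real (card {i\<in>{1..n}. X i w \<in> {..xi}}) - real (card {1..n}) * p\<bar>}"
  define Bp where "Bp m = {w\<in>space M. E \<le> \<bar>real (card {i\<in>{1..n}. X i w \<in> {xi<..xg (int m)}}) - real (card {1..n}) * (real m / real n)\<bar>}" for m
  define Bm where "Bm m = {w\<in>space M. E \<le> \<bar>real (card {i\<in>{1..n}. X i w \<in> {xg (- int m)<..xi}}) - real (card {1..n}) * (real m / real n)\<bar>}" for m
  define B where "B = B0 \<union> (\<Union>m\<in>{1..Jn}. Bp m \<union> Bm m)"
  have p01: "0 \<le> p" "p \<le> 1" using kn n0 by (auto simp: pdef)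
  have q0: "\<And>i. i \<in> {1..n} \<Longrightarrow> prob {w\<in>space M. X i w \<in> {..xi}} = p"
    using distF Fxi by auto
  have mJ: "\<bar>real_of_int (int m)\<bar> \<le> J" "\<bar>real_of_int (- int m)\<bar> \<le> J" if "m \<in> {1..Jn}" for m
    using that JnJ by auto
  have qp: "prob {w\<in>space M. X i w \<in> {xi<..xg (int m)}} = real m / real n"
    if "m \<in> {1..Jn}" "i \<in> {1..n}" for m i
  proof -
    have "prob {w\<in>space M. X i w \<in> {xi<..xg (int m)}} = F (xg (int m)) - F xi"
      using that(2) by (intro prob_interval rv distF xgpos[OF mJ(1)[OF that(1)]]) auto
    thus ?thesis using xg[OF mJ(1)[OF that(1)]] Fxi by simp
  qed
  have qm: "prob {w\<in>space M. X i w \<in> {xg (- int m)<..xi}} = real m / real n"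
    if "m \<in> {1..Jn}" "i \<in> {1..n}" for m i
  proof -
    have "prob {w\<in>space M. X i w \<in> {xg (- int m)<..xi}} = F xi - F (xg (- int m))"
      using that(2) by (intro prob_interval rv distF xgneg[OF mJ(2)[OF that(1)]]) auto
    thus ?thesis using xg[OF mJ(2)[OF that(1)]] Fxi by simp
  qed
  have fin: "finite {1..n}" by simp
  have cardn: "card {1..n} = n" by simp
  have B0_tail: "B0 \<in> events \<and> prob B0 \<le> 2 * exp (-((c1 * real n * s1)\<^sup>2) / (4 * real n))"
  proof -
    have s: "0 < c1 * real n * s1" "c1 * real n * s1 \<le> 2 * real n"
    proof -
      show "0 < c1 * real n * s1" using c1pos n0 s1pos by simp
      have "(c1 + c2 + 3) * s1 = c1 * s1 + (c2 + 3) * s1" by (simp add: algebra_simps)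
      moreover have "0 \<le> (c2 + 3) * s1" using c2pos s1pos by simp
      ultimately have "c1 * s1 \<le> 2" using small by linarith
      hence "real n * (c1 * s1) \<le> real n * 2" using n0 by (intro mult_left_mono) auto
      thus "c1 * real n * s1 \<le> 2 * real n" by (simp add: algebra_simps)
    qed
    have Sb: "{..xi} \<in> sets borel" by simp
    have Qc: "real (card {1..n}) * p \<le> real n" using p01 n0 unfolding cardn by (simp add: mult_left_le)
    note ct = count_tail[OF fin indn Sb q0 Qc s(1) s(2)]
    show ?thesis unfolding B0_def using ct by blast
  qed
  have Bp_tail: "Bp m \<in> events \<and> prob (Bp m) \<le> 2 * exp (-(E\<^sup>2) / (4 * real_of_int J))" if m: "m \<in> {1..Jn}" for m
  proof -
    have "real (card {1..n}) * (real m / real n) = real m" using n0 unfolding cardn by simp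
    also have "\<dots> \<le> J" using m JnJ by simp
    finally have Qc: "real (card {1..n}) * (real m / real n) \<le> J" .
    have Sb: "{xi<..xg (int m)} \<in> sets borel" by simp
    note ct = count_tail[OF fin indn Sb qp[OF m] Qc Epos EJ]
    show ?thesis unfolding Bp_def using ct by blast
  qed
  have Bm_tail: "Bm m \<in> events \<and> prob (Bm m) \<le> 2 * exp (-(E\<^sup>2) / (4 * real_of_int J))" if m: "m \<in> {1..Jn}" for m
  proof -
    have "real (card {1..n}) * (real m / real n) = real m" using n0 unfolding cardn by simp
    also have "\<dots> \<le> J" using m JnJ by simp
    finally have Qc: "real (card {1..n}) * (real m / real n) \<le> J" .
    have Sb: "{xg (- int m)<..xi} \<in> sets borel" by simp
    note ct = count_tail[OF fin indn Sb qm[OF m] Qc Epos EJ]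
    show ?thesis unfolding Bm_def using ct by blast
  qed
  have e0: "exp (-((c1 * real n * s1)\<^sup>2) / (4 * real n)) = real n powr (- c)"
  proof -
    have c1sq: "c1\<^sup>2 = 4 * c" unfolding c1def using c by (simp add: power_mult_distrib)
    have "(c1 * real n * s1)\<^sup>2 = c1\<^sup>2 * real n * (real n * s1\<^sup>2)" by (simp add: power2_eq_square algebra_simps)
    also have "\<dots> = 4 * c * real n * ln (real n)" using c1sq s1sq Lf(4) by simp
    finally have "(c1 * real n * s1)\<^sup>2 / (4 * real n) = 4 * c * real n * ln (real n) / (4 * real n)" by simp
    also have "\<dots> = c * ln (real n)" using n0 by simp
    finally have "(c1 * real n * s1)\<^sup>2 / (4 * real n) = c * ln (real n)" .
    hence "-((c1 * real n * s1)\<^sup>2) / (4 * real n) = - (c * ln (real n))" by simp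
    thus ?thesis using exp_neg_ln[OF n0, of c] by simp
  qed
  have e1: "exp (-(E\<^sup>2) / (4 * real_of_int J)) \<le> real n powr (- (c + 1))"
  proof -
    have c3pos: "c3 > 0" using c1pos c2pos by (simp add: c3_def)
    have key: "c2\<^sup>2 - 4 * (c + 1) * c3 = (c1 + 3)\<^sup>2"
      unfolding c3_def c2def by (simp add: power2_eq_square algebra_simps)
    have "(c + 1) * ln (real n) \<le> c2\<^sup>2 / (4 * c3) * ln (real n)"
    proof (intro mult_right_mono)
      have "4 * (c + 1) * c3 \<le> c2\<^sup>2" using key zero_le_power2[of "c1 + 3"] by linarith
      thus "c + 1 \<le> c2\<^sup>2 / (4 * c3)" using c3pos by (simp add: field_simps)
    qed (use Lf(5) in simp)
    also have "\<dots> = E\<^sup>2 / (4 * (c3 * real n * s1))"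
    proof -
      have "E\<^sup>2 = c2\<^sup>2 * (real n)\<^sup>2 * s2\<^sup>2" by (simp add: Edef power_mult_distrib)
      also have "\<dots> = c2\<^sup>2 * real n * (real n * L) * s1" using s2sq by (simp add: power2_eq_square algebra_simps)
      also have "\<dots> = c2\<^sup>2 * real n * ln (real n) * s1" using Lf(4) by simp
      finally have "E\<^sup>2 / (4 * (c3 * real n * s1)) = c2\<^sup>2 * real n * ln (real n) * s1 / (4 * (c3 * real n * s1))" by simp
      also have "\<dots> = c2\<^sup>2 / (4 * c3) * ln (real n)" using n0 s1pos c3pos by (simp add: field_simps)
      finally show ?thesis by simp
    qed
    also have "\<dots> \<le> E\<^sup>2 / (4 * real_of_int J)"
    proof (rule divide_left_mono)
      show "4 * real_of_int J \<le> 4 * (c3 * real n * s1)" using Jle by simp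
      have "0 < c3 * real n * s1" using c3pos n0 s1pos by simp
      thus "0 < 4 * (c3 * real n * s1) * (4 * real_of_int J)" using Jpos c3pos n0 s1pos by (intro mult_pos_pos) auto
    qed simp
    finally have "(c + 1) * ln (real n) \<le> E\<^sup>2 / (4 * real_of_int J)" .
    hence "exp (-(E\<^sup>2) / (4 * real_of_int J)) \<le> exp (- ((c + 1) * ln (real n)))" by simp
    thus ?thesis using exp_neg_ln[OF n0, of "c + 1"] by simp
  qed
  have UNs: "(\<Union>m\<in>{1..Jn}. Bp m \<union> Bm m) \<in> events"
    using Bp_tail Bm_tail by (intro sets.finite_UN sets.Un) auto
  have Bsets: "B \<in> events" unfolding B_def using B0_tail UNs by auto
  have u1: "prob B \<le> prob B0 + prob (\<Union>m\<in>{1..Jn}. Bp m \<union> Bm m)"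
    unfolding B_def using B0_tail UNs by (intro measure_Un_le) auto
  have u2: "prob (\<Union>m\<in>{1..Jn}. Bp m \<union> Bm m) \<le> (\<Sum>m\<in>{1..Jn}. prob (Bp m \<union> Bm m))"
    using Bp_tail Bm_tail by (intro finite_measure_subadditive_finite) auto
  have u3: "(\<Sum>m\<in>{1..Jn}. prob (Bp m \<union> Bm m)) \<le> (\<Sum>m\<in>{1..Jn}. 4 * real n powr (- (c + 1)))"
  proof (intro sum_mono)
    fix m assume m: "m \<in> {1..Jn}"
    have "prob (Bp m \<union> Bm m) \<le> prob (Bp m) + prob (Bm m)"
      using Bp_tail[OF m] Bm_tail[OF m] by (intro measure_Un_le) auto
    thus "prob (Bp m \<union> Bm m) \<le> 4 * real n powr (- (c + 1))"
      using Bp_tail[OF m] Bm_tail[OF m] e1 by linarith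
  qed
  have u4: "(\<Sum>m\<in>{1..Jn}. 4 * real n powr (- (c + 1))) = real_of_int J * (4 * real n powr (- (c + 1)))"
    using JnJ by simp
  have PB0: "prob B \<le> prob B0 + real_of_int J * (4 * real n powr (- (c + 1)))"
    using u1 u2 u3 u4 by linarith
  have PB: "prob B \<le> 2 * real n powr (- c) + real_of_int J * (4 * real n powr (- (c + 1)))"
    using PB0 B0_tail e0 by linarith
  have c3n: "0 \<le> c3 * real n" using c1pos c2pos n0 by (simp add: c3_def)
  have Jc3: "real_of_int J \<le> c3 * real n"
    using Jle mult_left_mono[OF s1le c3n] by simp
  have pw: "real n * real n powr (- (c + 1)) = real n powr (- c)"
  proof -
    have "real n * real n powr (- (c + 1)) = real n powr 1 * real n powr (- (c + 1))" using n0 by simp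
    also have "\<dots> = real n powr (1 + - (c + 1))" by (rule powr_add[symmetric])
    also have "\<dots> = real n powr (- c)" by simp
    finally show ?thesis .
  qed
  have "real_of_int J * (4 * real n powr (- (c + 1))) \<le> (c3 * real n) * (4 * real n powr (- (c + 1)))"
    using Jc3 by (intro mult_right_mono) auto
  also have "\<dots> = 4 * c3 * (real n * real n powr (- (c + 1)))" by (simp add: algebra_simps)
  also have "\<dots> = 4 * c3 * real n powr (- c)" by (simp only: pw)
  finally have "prob B \<le> 2 * real n powr (- c) + 4 * c3 * real n powr (- c)" using PB by linarith
  hence "prob B \<le> (2 + 4 * c3) * real n powr (- c)" by (simp add: algebra_simps)
  moreover have "\<forall>w\<in>space M. w \<notin> B \<longrightarrow>
            \<bar>real (card {i\<in>{1..n}. X i w \<in> {..xi}}) - real n * p\<bar> < c1 * real n * s1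
          \<and> (\<forall>m\<in>{1..Jn}. \<bar>real (card {i\<in>{1..n}. X i w \<in> {xi<..xg (int m)}}) - real n * (real m / real n)\<bar> < E)
          \<and> (\<forall>m\<in>{1..Jn}. \<bar>real (card {i\<in>{1..n}. X i w \<in> {xg (- int m)<..xi}}) - real n * (real m / real n)\<bar> < E)"
    unfolding B_def B0_def Bp_def Bm_def by auto
  ultimately show ?thesis using Bsets unfolding c3_def by blast
qed


lemma (in prob_space) dist_props:
  fixes Z :: "'a \<Rightarrow> real"
  assumes rv: "random_variable borel Z" and F: "\<And>x. prob {w\<in>space M. Z w \<le> x} = F x"
  shows "mono F" "\<And>u. u < 1 \<Longrightarrow> \<exists>x. u \<le> F x" "\<And>u. 0 < u \<Longrightarrow> \<exists>x. F x < u"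
proof -
  have ev: "{w\<in>space M. Z w \<le> x} \<in> events" for x using rv by measurable
  show "mono F"
  proof (rule monoI)
    fix x y :: real assume "x \<le> y"
    hence "{w\<in>space M. Z w \<le> x} \<subseteq> {w\<in>space M. Z w \<le> y}" by auto
    thus "F x \<le> F y" unfolding F[symmetric] using ev by (intro finite_measure_mono) auto
  qed
  define A where "A m = {w\<in>space M. Z w \<le> real m}" for m :: nat
  have "(\<lambda>m. prob (A m)) \<longlonglongrightarrow> prob (\<Union>m. A m)"
    using ev by (intro finite_Lim_measure_incseq) (auto simp: A_def incseq_def)
  moreover have "(\<Union>m. A m) = space M"
  proof safe
    fix w assume "w \<in> space M"
    obtain m :: nat where "Z w \<le> real m" using real_nat_ceiling_ge by blast
    thus "w \<in> (\<Union>m. A m)" using \<open>w \<in> space M\<close> by (auto simp: A_def)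
  qed (auto simp: A_def)
  ultimately have lim1: "(\<lambda>m. F (real m)) \<longlonglongrightarrow> 1" by (simp add: A_def F prob_space)
  show "\<exists>x. u \<le> F x" if "u < 1" for u
  proof -
    have "\<forall>\<^sub>F m in sequentially. u < F (real m)" using order_tendstoD(1)[OF lim1 that] .
    then obtain m where "u < F (real m)" by (auto simp: eventually_sequentially)
    thus ?thesis by (auto intro!: exI[of _ "real m"])
  qed
  define A' where "A' m = {w\<in>space M. Z w \<le> - real m}" for m :: nat
  have "(\<lambda>m. prob (A' m)) \<longlonglongrightarrow> prob (\<Inter>m. A' m)"
    using ev by (intro finite_Lim_measure_decseq) (auto simp: A'_def decseq_def)
  moreover have "(\<Inter>m. A' m) = {}"
  proof safe
    fix w assume "w \<in> (\<Inter>m. A' m)"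
    hence all: "Z w \<le> - real m" for m by (auto simp: A'_def)
    obtain m :: nat where "- Z w < real m" using reals_Archimedean2 by blast
    with all[of m] show "w \<in> {}" by linarith
  qed
  ultimately have lim0: "(\<lambda>m. F (- real m)) \<longlonglongrightarrow> 0" by (simp add: A'_def F)
  show "\<exists>x. F x < u" if "0 < u" for u
  proof -
    have "\<forall>\<^sub>F m in sequentially. F (- real m) < u" using order_tendstoD(2)[OF lim0 that] .
    then obtain m where "F (- real m) < u" by (auto simp: eventually_sequentially)
    thus ?thesis by blast
  qed
qed

lemma margin:
  fixes U :: "real set"
  assumes U: "open U" and sub: "{a1..a2} \<subseteq> U" and a: "a1 \<le> a2"
  shows "\<exists>\<eta>>0. {a1 - 2*\<eta>..a2 + 2*\<eta>} \<subseteq> U"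
proof -
  have "a1 \<in> U" "a2 \<in> U" using sub a by auto
  then obtain e1 e2 where e1: "e1 > 0" "ball a1 e1 \<subseteq> U" and e2: "e2 > 0" "ball a2 e2 \<subseteq> U"
    using U by (meson open_contains_ball)
  define \<eta> where "\<eta> = min e1 e2 / 4"
  have \<eta>: "\<eta> > 0" using e1 e2 by (simp add: \<eta>_def)
  have "{a1 - 2*\<eta>..a2 + 2*\<eta>} \<subseteq> U"
  proof
    fix x assume x: "x \<in> {a1 - 2*\<eta>..a2 + 2*\<eta>}"
    show "x \<in> U"
    proof (cases "x < a1")
      case True
      hence "dist a1 x < e1" using x \<eta> e1 e2 by (auto simp: dist_real_def \<eta>_def)
      thus ?thesis using e1 by auto
    next
      case False
      show ?thesis
      proof (cases "x > a2")
        case True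
        hence "dist a2 x < e2" using x \<eta> e1 e2 by (auto simp: dist_real_def \<eta>_def)
        thus ?thesis using e2 by auto
      next
        case False
        thus ?thesis using \<open>\<not> x < a1\<close> sub by auto
      qed
    qed
  qed
  thus ?thesis using \<eta> by blast
qed

lemma ev_liminf:
  assumes "liminf (\<lambda>n. ereal (x n)) = ereal a" "e > 0"
  shows "\<forall>\<^sub>F n in sequentially. a - e < x n"
proof -
  have "ereal a \<le> liminf (\<lambda>n. ereal (x n))" using assms by simp
  hence "\<forall>y<ereal a. \<forall>\<^sub>F n in sequentially. y < ereal (x n)" by (simp only: le_Liminf_iff)
  moreover have "ereal (a - e) < ereal a" using assms(2) by simp
  ultimately have "\<forall>\<^sub>F n in sequentially. ereal (a - e) < ereal (x n)" by blast
  thus ?thesis by simp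
qed

lemma ev_limsup:
  assumes "limsup (\<lambda>n. ereal (x n)) = ereal a" "e > 0"
  shows "\<forall>\<^sub>F n in sequentially. x n < a + e"
proof -
  have "limsup (\<lambda>n. ereal (x n)) \<le> ereal a" using assms by simp
  hence "\<forall>y>ereal a. \<forall>\<^sub>F n in sequentially. ereal (x n) < y" by (simp only: Limsup_le_iff)
  moreover have "ereal a < ereal (a + e)" using assms(2) by simp
  ultimately have "\<forall>\<^sub>F n in sequentially. ereal (x n) < ereal (a + e)" by blast
  thus ?thesis by simp
qed

lemma s1_tendsto: "((\<lambda>n::nat. (ln (real n) / real n) powr (1/2)) \<longlongrightarrow> 0) sequentially"
  by real_asymp


theorem corollary2:
  fixes M :: "'a measure" and X :: "nat \<Rightarrow> 'a \<Rightarrow> real"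
    and F G f g :: "real \<Rightarrow> real" and k :: "nat \<Rightarrow> nat"
    and U :: "real set" and a1 a2 \<alpha> :: real
  assumes "prob_space M"
    and indep: "prob_space.indep_vars M (\<lambda>_. borel) X {1..}"
    and distF: "\<And>i x. i \<ge> 1 \<Longrightarrow> measure M {w\<in>space M. X i w \<le> x} = F x"
    and k_le: "\<And>n. k n \<le> n"
    and a1: "liminf (\<lambda>n. ereal (real (k n) / real n)) = ereal a1"
    and a2: "limsup (\<lambda>n. ereal (real (k n) / real n)) = ereal a2"
    and a_bounds: "0 < a1" "a1 \<le> a2" "a2 < 1"
    and U_open: "open U" and U_sub: "U \<subseteq> {0<..<1}" and U_cont: "{a1..a2} \<subseteq> U"
    and f_deriv: "\<And>x. x \<in> quantile F ` U \<Longrightarrow> (F has_real_derivative f x) (at x) \<and> f x > 0"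
    and g_deriv: "\<And>x. x \<in> quantile F ` U \<Longrightarrow> (G has_real_derivative g x) (at x)"
    and alpha: "\<alpha> \<ge> 1/2"
    and f_holder: "holder_on (quantile F ` U) \<alpha> f"
    and g_holder: "holder_on (quantile F ` U) \<alpha> g"
  shows "\<forall>c>0. \<exists>A>0. \<exists>C N. \<forall>n\<ge>N.
     (let xi = quantile F (real (k n) / real n);
          R = (\<lambda>w. int_mean G X n (k n) xi w
                   + (1/2) * (ecdf X n w xi - F xi)\<^sup>2 * (g xi / f xi))
      in \<exists>B\<in>sets M. {w\<in>space M. \<bar>R w\<bar> > A * (ln (real n) / real n) powr (5/4)} \<subseteq> B
                   \<and> measure M B \<le> C * real n powr (- c))"
proof -
  interpret P: prob_space M by (rule assms(1))
  have rv1: "X 1 \<in> borel_measurable M" using indep by (auto simp: P.indep_vars_def)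
  have distF1: "\<And>x. P.prob {w\<in>space M. X 1 w \<le> x} = F x" using distF[of 1] by simp
  note dp = P.dist_props[OF rv1 distF1]
  interpret Q: qdist F using dp by unfold_locales auto
  obtain \<eta> where \<eta>: "\<eta> > 0" "{a1 - 2*\<eta>..a2 + 2*\<eta>} \<subseteq> U"
    using margin[OF U_open U_cont a_bounds(2)] by blast
  define a0 where "a0 = a1 - 2*\<eta>"
  define b0 where "b0 = a2 + 2*\<eta>"
  have ab_sub: "{a0..b0} \<subseteq> U" using \<eta> by (simp add: a0_def b0_def)
  have ab_le: "a0 \<le> b0" using a_bounds \<eta> by (simp add: a0_def b0_def)
  have a0U: "a0 \<in> U" and b0U: "b0 \<in> U" using ab_sub ab_le by auto
  have a0pos: "0 < a0" and b0lt: "b0 < 1" using a0U b0U U_sub by auto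
  define xa where "xa = quantile F a0"
  define xb where "xb = quantile F b0"
  have xab: "xa \<le> xb" unfolding xa_def xb_def using a0pos ab_le b0lt by (rule Q.quantile_mono)
  have Wsub: "{xa..xb} \<subseteq> quantile F ` U"
    unfolding xa_def xb_def by (rule Q.window_sub[OF U_sub ab_sub ab_le f_deriv])
  have FQ: "F (quantile F u) = u" if "u \<in> {a0..b0}" for u
  proof -
    have uU: "u \<in> U" using that ab_sub by auto
    hence "isCont F (quantile F u)" using f_deriv[of "quantile F u"] by (auto intro: DERIV_isCont)
    thus ?thesis using uU U_sub Q.F_quantile by auto
  qed
  have dF: "(F has_real_derivative f x) (at x)" "f x > 0" if "xa \<le> x" "x \<le> xb" for x
    using f_deriv[of x] Wsub that by auto
  have dG: "(G has_real_derivative g x) (at x)" if "xa \<le> x" "x \<le> xb" for x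
    using g_deriv[of x] Wsub that by auto
  obtain Lf where Lf: "Lf \<ge> 0" "\<forall>x\<in>{xa..xb}. \<forall>y\<in>{xa..xb}. \<bar>f x - f y\<bar> \<le> Lf * \<bar>x - y\<bar> powr (1/2)"
    using holder_half[OF f_holder alpha Wsub order_refl] by blast
  obtain Lg where Lg: "Lg \<ge> 0" "\<forall>x\<in>{xa..xb}. \<forall>y\<in>{xa..xb}. \<bar>g x - g y\<bar> \<le> Lg * \<bar>x - y\<bar> powr (1/2)"
    using holder_half[OF g_holder alpha Wsub order_refl] by blast
  have contf: "continuous_on {xa..xb} f" using Lf by (intro holder_half_cont[of Lf]) auto
  have contg: "continuous_on {xa..xb} g" using Lg by (intro holder_half_cont[of Lg]) auto
  obtain xm where xm: "xm \<in> {xa..xb}" "\<forall>y\<in>{xa..xb}. f xm \<le> f y"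
    using continuous_attains_inf[OF compact_Icc _ contf] xab by auto
  define m where "m = f xm"
  have mpos: "m > 0" using dF xm unfolding m_def by auto
  have contag: "continuous_on {xa..xb} (\<lambda>x. \<bar>g x\<bar>)" using contg by (rule continuous_on_rabs)
  obtain xM where xM: "xM \<in> {xa..xb}" "\<forall>y\<in>{xa..xb}. \<bar>g y\<bar> \<le> \<bar>g xM\<bar>"
    using continuous_attains_sup[OF compact_Icc _ contag] xab by auto
  define Mg where "Mg = \<bar>g xM\<bar>"
  define K where "K = (Lg + Mg * Lf / m) / m powr (3/2)"
  define Mm where "Mm = Mg / m"
  have Mg0: "Mg \<ge> 0" by (simp add: Mg_def)
  have K0: "K \<ge> 0" unfolding K_def using Lf Lg Mg0 mpos by simp
  have Mm0: "Mm \<ge> 0" unfolding Mm_def using Mg0 mpos by simp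
  have taylorW: "\<bar>G y - G \<xi> - (g \<xi> / f \<xi>) * (F y - F \<xi>)\<bar> \<le> K * \<bar>F y - F \<xi>\<bar> powr (3/2)"
    if "\<xi> \<in> {xa..xb}" "y \<in> {xa..xb}" for \<xi> y
    unfolding K_def
  proof (rule taylor_holder[where xa = xa and xb = xb])
    show "\<And>x. xa \<le> x \<Longrightarrow> x \<le> xb \<Longrightarrow> (F has_real_derivative f x) (at x)" using dF by blast
    show "\<And>x. xa \<le> x \<Longrightarrow> x \<le> xb \<Longrightarrow> (G has_real_derivative g x) (at x)" using dG by blast
    show "0 < m" by (rule mpos)
    show "\<And>x. xa \<le> x \<Longrightarrow> x \<le> xb \<Longrightarrow> m \<le> f x" using xm unfolding m_def by auto
    show "\<And>x y. xa \<le> x \<Longrightarrow> x \<le> xb \<Longrightarrow> xa \<le> y \<Longrightarrow> y \<le> xb \<Longrightarrow> \<bar>f x - f y\<bar> \<le> Lf * \<bar>x - y\<bar> powr (1/2)"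
      using Lf by auto
    show "\<And>x y. xa \<le> x \<Longrightarrow> x \<le> xb \<Longrightarrow> xa \<le> y \<Longrightarrow> y \<le> xb \<Longrightarrow> \<bar>g x - g y\<bar> \<le> Lg * \<bar>x - y\<bar> powr (1/2)"
      using Lg by auto
    show "0 \<le> Lf" "0 \<le> Lg" using Lf Lg by auto
    show "\<bar>g \<xi>\<bar> \<le> Mg" using xM that unfolding Mg_def by auto
    show "xa \<le> \<xi>" "\<xi> \<le> xb" "xa \<le> y" "y \<le> xb" using that by auto
  qed
  have rbound: "\<bar>g \<xi> / f \<xi>\<bar> \<le> Mm" if "\<xi> \<in> {xa..xb}" for \<xi>
  proof -
    have f\<xi>: "m \<le> f \<xi>" using xm that unfolding m_def by auto
    have "\<bar>g \<xi> / f \<xi>\<bar> = \<bar>g \<xi>\<bar> / f \<xi>" using f\<xi> mpos by (simp add: abs_divide)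
    also have "\<dots> \<le> Mg / f \<xi>" using xM that f\<xi> mpos unfolding Mg_def by (intro divide_right_mono) auto
    also have "\<dots> \<le> Mg / m" using Mg0 f\<xi> mpos by (intro divide_left_mono) auto
    finally show ?thesis unfolding Mm_def .
  qed
  have ev_p: "\<forall>\<^sub>F n in sequentially. a1 - \<eta> < real (k n) / real n \<and> real (k n) / real n < a2 + \<eta>"
    using ev_liminf[OF a1 \<eta>(1)] ev_limsup[OF a2 \<eta>(1)] by (auto elim: eventually_elim2)
  show ?thesis
  proof (intro allI impI)
    fix c :: real assume c: "c > 0"
    define c1 where "c1 = 2 * sqrt c"
    define c2 where "c2 = 4 * (c + 1) + c1 + 3"
    define c3 where "c3 = c1 + c2 + 3"
    define A0 where "A0 = (Mm * c1 * (1/2 + c2 + 2)) + c1 * K * (c1 + c2 + 2) powr (3/2)"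
    define A where "A = A0 + 1"
    define C where "C = 2 + 4 * c3"
    have c1pos: "c1 > 0" using c by (simp add: c1_def)
    have c2pos: "c2 > 0" using c c1pos by (simp add: c2_def)
    have c3pos: "c3 > 0" using c1pos c2pos by (simp add: c3_def)
    have A00: "A0 \<ge> 0" unfolding A0_def using Mm0 K0 c1pos c2pos by simp
    have Apos: "A > 0" using A00 by (simp add: A_def)
    have "((\<lambda>n::nat. c3 * (ln (real n) / real n) powr (1/2)) \<longlongrightarrow> c3 * 0) sequentially"
      by (intro tendsto_mult tendsto_const s1_tendsto)
    hence "\<forall>\<^sub>F n in sequentially. c3 * (ln (real n) / real n) powr (1/2) < min \<eta> 1"
      using \<eta>(1) by (intro order_tendstoD(2)) auto
    moreover have "\<forall>\<^sub>F n in sequentially. n \<ge> 3" by (rule eventually_ge_at_top)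
    ultimately have "\<forall>\<^sub>F n in sequentially. n \<ge> 3 \<and> (a1 - \<eta> < real (k n) / real n \<and> real (k n) / real n < a2 + \<eta>)
        \<and> c3 * (ln (real n) / real n) powr (1/2) < min \<eta> 1"
      using ev_p by eventually_elim auto
    then obtain N0 where N0: "\<And>n. n \<ge> N0 \<Longrightarrow> n \<ge> 3 \<and> (a1 - \<eta> < real (k n) / real n \<and> real (k n) / real n < a2 + \<eta>)
        \<and> c3 * (ln (real n) / real n) powr (1/2) < min \<eta> 1"
      unfolding eventually_sequentially by blast
    show "\<exists>A>0. \<exists>C N. \<forall>n\<ge>N.
     (let xi = quantile F (real (k n) / real n);
          R = (\<lambda>w. int_mean G X n (k n) xi w
                   + (1/2) * (ecdf X n w xi - F xi)\<^sup>2 * (g xi / f xi))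
      in \<exists>B\<in>sets M. {w\<in>space M. \<bar>R w\<bar> > A * (ln (real n) / real n) powr (5/4)} \<subseteq> B
                   \<and> measure M B \<le> C * real n powr (- c))"
    proof (rule exI[of _ A], rule conjI[OF Apos], rule exI[of _ C], rule exI[of _ N0], intro allI impI)
      fix n assume nN: "n \<ge> N0"
      note Nn = N0[OF nN]
      have n3: "n \<ge> 3" using Nn by blast
      define L where "L = ln (real n) / real n"
      define s1 where "s1 = L powr (1/2)"
      define s2 where "s2 = L powr (3/4)"
      define p where "p = real (k n) / real n"
      define xi where "xi = quantile F p"
      define J where "J = \<lceil>(c1 + c2) * real n * s1\<rceil> + 2"
      define Jn where "Jn = nat J"
      define E where "E = c2 * real n * s2"
      define T where "T = (c1 + c2 + 2) * s1"
      define xg where "xg j = quantile F (p + real_of_int j / real n)" for j :: int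
      have pb: "a1 - \<eta> < p" "p < a2 + \<eta>" using Nn unfolding p_def by auto
      have small0: "c3 * s1 < min \<eta> 1" using Nn unfolding s1_def L_def by auto
      have n0: "real n > 0" using n3 by simp
      have Lf': "0 < L" "L \<le> 1" "1 / real n \<le> L" using L_facts[OF n3] unfolding L_def by auto
      have n1: "real n \<ge> 1" using n3 by simp
      note sf = s_facts[OF Lf' n1]
      have s21: "s2 \<le> s1" and s2n: "1 / real n \<le> s2" and s20: "0 \<le> s2"
        using sf unfolding s1_def s2_def by auto
      have s10: "0 \<le> s1" using s20 s21 by linarith
      have Jn_le: "real_of_int J / real n \<le> c3 * s1"
      proof -
        have "of_int \<lceil>(c1 + c2) * real n * s1\<rceil> \<le> (c1 + c2) * real n * s1 + 1" by (rule of_int_ceiling_le_add_one)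
        hence "real_of_int J \<le> (c1 + c2) * real n * s1 + 3" unfolding J_def by (simp; linarith)
        hence "real_of_int J / real n \<le> ((c1 + c2) * real n * s1 + 3) / real n"
          using n0 by (intro divide_right_mono) auto
        also have "\<dots> = (c1 + c2) * s1 + 3 * (1 / real n)" using n0 by (simp add: field_simps)
        also have "\<dots> \<le> (c1 + c2) * s1 + 3 * s1" using s2n s21 by simp
        also have "\<dots> = c3 * s1" by (simp add: c3_def algebra_simps)
        finally show ?thesis .
      qed
      have grid_in: "p + real_of_int j / real n \<in> {a0..b0}" "a0 < p + real_of_int j / real n" "p + real_of_int j / real n < b0"
        if j: "\<bar>real_of_int j\<bar> \<le> J" for j
      proof -
        have "\<bar>real_of_int j\<bar> / real n \<le> real_of_int J / real n" using j n0 by (intro divide_right_mono) auto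
        hence "\<bar>real_of_int j / real n\<bar> < \<eta>" using Jn_le small0 n0 by (simp add: abs_divide)
        hence jb: "- \<eta> < real_of_int j / real n" "real_of_int j / real n < \<eta>" unfolding abs_less_iff by auto
        thus "p + real_of_int j / real n \<in> {a0..b0}" "a0 < p + real_of_int j / real n" "p + real_of_int j / real n < b0"
          using pb unfolding a0_def b0_def by auto
      qed
      have J0: "0 \<le> real_of_int J"
      proof -
        have "0 \<le> (c1 + c2) * real n * s1" using c1pos c2pos n0 s10 by simp
        moreover have "(c1 + c2) * real n * s1 \<le> of_int \<lceil>(c1 + c2) * real n * s1\<rceil>" by (rule le_of_int_ceiling)
        ultimately show ?thesis unfolding J_def by simp
      qed
      have xg0: "xg 0 = xi" by (simp add: xg_def xi_def)
      have pin: "p \<in> {a0..b0}" using grid_in[of 0] J0 by simp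
      have Fxi: "F xi = p" unfolding xi_def using FQ[OF pin] .
      have xgF: "F (xg j) = p + real_of_int j / real n" if "\<bar>real_of_int j\<bar> \<le> J" for j
        unfolding xg_def using FQ[OF grid_in(1)[OF that]] .
      have p0: "0 < p" using pin a0pos by auto
      have xgpos: "xi \<le> xg j" if "\<bar>real_of_int j\<bar> \<le> J" "0 \<le> j" for j
        unfolding xi_def xg_def using p0 that(2) grid_in(3)[OF that(1)] b0lt n0
        by (intro Q.quantile_mono) auto
      have xgneg: "xg j \<le> xi" if "\<bar>real_of_int j\<bar> \<le> J" "j \<le> 0" for j
        unfolding xi_def xg_def using that(2) grid_in(2)[OF that(1)] a0pos pin b0lt n0
        by (intro Q.quantile_mono) (auto simp: divide_nonpos_pos)
      have xiW: "xi \<in> {xa..xb}"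
        unfolding xi_def xa_def xb_def using pin a0pos b0lt by (auto intro!: Q.quantile_mono)
      have Tlt: "T < \<eta>"
      proof -
        have "T \<le> c3 * s1" unfolding T_def c3_def using s10 by (simp add: algebra_simps)
        thus ?thesis using small0 by linarith
      qed
      have taylor: "\<bar>G y - G xi - (g xi / f xi) * (F y - p)\<bar> \<le> K * \<bar>F y - p\<bar> powr (3/2)"
        if y: "\<bar>F y - p\<bar> \<le> T" for y
      proof -
        have Fy: "a0 < F y" "F y < b0" using y Tlt pb unfolding a0_def b0_def by (auto simp: abs_le_iff)
        have "xa \<le> y" unfolding xa_def using Q.quantile_le[OF a0pos] Fy by auto
        moreover have "y \<le> xb"
        proof (rule ccontr)
          assume "\<not> y \<le> xb"
          hence "b0 \<le> F y" unfolding xb_def using Q.quantile_less[OF _ b0lt] a0pos ab_le by auto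
          thus False using Fy by auto
        qed
        ultimately have "y \<in> {xa..xb}" by auto
        from taylorW[OF xiW this] show ?thesis unfolding Fxi .
      qed
      have kn: "k n \<le> n" by (rule k_le)
      have small: "(c1 + c2 + 3) * s1 \<le> 1" using small0 unfolding c3_def by linarith
      obtain B where B: "B \<in> sets M"
        and good: "\<forall>w\<in>space M. w \<notin> B \<longrightarrow>
            \<bar>real (card {i\<in>{1..n}. X i w \<in> {..xi}}) - real n * p\<bar> < c1 * real n * s1
          \<and> (\<forall>m\<in>{1..Jn}. \<bar>real (card {i\<in>{1..n}. X i w \<in> {xi<..xg (int m)}}) - real n * (real m / real n)\<bar> < E)
          \<and> (\<forall>m\<in>{1..Jn}. \<bar>real (card {i\<in>{1..n}. X i w \<in> {xg (- int m)<..xi}}) - real n * (real m / real n)\<bar> < E)"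
        and PB: "measure M B \<le> (2 + 4 * (c1 + c2 + 3)) * real n powr (- c)"
        using P.per_n_prob[OF indep distF n3 kn c c1_def c2_def L_def s1_def s2_def p_def J_def Jn_def E_def small xgF xgpos xgneg Fxi]
        by blast
      have incl: "{w\<in>space M. \<bar>int_mean G X n (k n) xi w + (1/2) * (ecdf X n w xi - F xi)\<^sup>2 * (g xi / f xi)\<bar>
                    > A * (ln (real n) / real n) powr (5/4)} \<subseteq> B"
      proof
        fix w assume w: "w \<in> {w\<in>space M. \<bar>int_mean G X n (k n) xi w + (1/2) * (ecdf X n w xi - F xi)\<^sup>2 * (g xi / f xi)\<bar>
                    > A * (ln (real n) / real n) powr (5/4)}"
        show "w \<in> B"
        proof (rule ccontr)
          assume wB: "w \<notin> B"
          have gw: "\<bar>real (card {i\<in>{1..n}. X i w \<in> {..xi}}) - real n * p\<bar> < c1 * real n * s1"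
            "\<And>m. m \<in> {1..Jn} \<Longrightarrow> \<bar>real (card {i\<in>{1..n}. X i w \<in> {xi<..xg (int m)}}) - real n * (real m / real n)\<bar> < E"
            "\<And>m. m \<in> {1..Jn} \<Longrightarrow> \<bar>real (card {i\<in>{1..n}. X i w \<in> {xg (- int m)<..xi}}) - real n * (real m / real n)\<bar> < E"
            using good w wB by auto
          have "\<bar>int_mean G X n (k n) xi w + (1/2) * (ecdf X n w xi - F xi)\<^sup>2 * (g xi / f xi)\<bar> \<le> A0 * L powr (5/4)"
            unfolding A0_def
            using good_bound[where X=X and w=w and xg=xg and xi=xi and G=G and r="g xi / f xi" and K=K
                and Mm=Mm and F=F and p=p and T=T and n=n and k="k n" and L=L
                and J=J and Jn=Jn and E=E,
                OF n3 kn Q.Fmono L_def s1_def s2_def p_def J_def Jn_def E_def T_def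
                _ _ xgF xg0 xgpos xgneg Fxi taylor rbound[OF xiW] K0 gw] c1pos c2pos by auto
          also have "\<dots> \<le> A * L powr (5/4)" unfolding A_def by (simp add: algebra_simps)
          finally show False using w unfolding L_def by auto
        qed
      qed
      show "let xi = quantile F (real (k n) / real n);
          R = (\<lambda>w. int_mean G X n (k n) xi w
                   + (1/2) * (ecdf X n w xi - F xi)\<^sup>2 * (g xi / f xi))
      in \<exists>B\<in>sets M. {w\<in>space M. \<bar>R w\<bar> > A * (ln (real n) / real n) powr (5/4)} \<subseteq> B
                   \<and> measure M B \<le> C * real n powr (- c)"
        unfolding Let_def p_def[symmetric] xi_def[symmetric]
        using B incl PB unfolding C_def c3_def by blast
    qed
  qed
qed

end
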